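(* Let $\overline{M}$ be a smooth manifold with boundary $\partial M$ and interior $M$, let $\nabla$ be a linear connection on $TM$ which is projectively compact of some order $\alpha\in(0,2]$, and let $R=R_{ab}{}^c{}_d$ be the curvature tensor of $\nabla$. Let $\rho$ be a local defining function for $\partial M$, $\rho_a=d\rho$, and let $\hat\nabla=\nabla+\frac{d\rho}{\alpha\rho}$ be the associated connection in the projective class (smooth up to the boundary). (i) If $\alpha=1$, then $\rho R$ admits a smooth extension to the boundary with boundary value $\delta^c_a\hat\nabla_b\rho_d-\delta^c_b\hat\nabla_a\rho_d$. (ii) If $\alpha\neq1$, then $\rho^2R$ admits a smooth extension to the boundary with boundary value equal to $\frac{1-\alpha}{\alpha^2}$ times the rank-one curvature tensor determined by the one-form $d\rho$, i.e. $\frac{1-\alpha}{\alpha^2}(\delta^c_a\rho_b\rho_d-\delta^c_b\rho_a\rho_d)$.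
   Context: A local defining function for $\partial M$ is a smooth $\rho:U\to[0,\infty)$, $U\subset\overline{M}$ open, with $\rho^{-1}(0)=U\cap\partial M$ and $d\rho\neq0$ on $U\cap\partial M$. For an affine connection $\nabla$ and one-form $\Upsilon$, $\nabla+\Upsilon$ denotes $\xi,\eta\mapsto\nabla_\xi\eta+\Upsilon(\xi)\eta+\Upsilon(\eta)\xi$. $\nabla$ is projectively compact of order $\alpha$ if each boundary point has a local defining function $\rho$ on a neighborhood $U$ such that $\nabla+\frac{d\rho}{\alpha\rho}$ extends smoothly from $U\cap M$ to $U$ (then this holds for every local defining function). Curvature convention: $(\nabla_a\nabla_b-\nabla_b\nabla_a)v^c=R_{ab}{}^c{}_dv^d$. For a one-form $\psi_a$, the rank-one curvature tensor determined by $\psi$ is $\delta^c_a\psi_b\psi_d-\delta^c_b\psi_a\psi_d$. *)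

theory Defs
  imports "HOL-Analysis.Analysis"
begin

(* Local-coordinate model: a chart of the manifold with boundary is a relatively
   open subset D of the closed half space {x. 0 <= x$i0}; its boundary part lies in
   {x. x$i0 = 0}. *)

(* C^infinity on a set (used on open sets): differentiable, and every directional
   derivative is again C^infinity (greatest fixed point = all orders). *)
coinductive Cinf :: "('a::euclidean_space) set \<Rightarrow> ('a \<Rightarrow> real) \<Rightarrow> bool" for S where
  "(\<forall>x\<in>S. (f has_derivative f' x) (at x)) \<Longrightarrow> (\<forall>v. Cinf S (\<lambda>x. f' x v)) \<Longrightarrow> Cinf S f"

definition smooth_upto :: "('a::euclidean_space) set \<Rightarrow> ('a \<Rightarrow> real) \<Rightarrow> bool" where
  "smooth_upto A f \<longleftrightarrow>
     (\<forall>p\<in>A. \<exists>W g. open W \<and> p \<in> W \<and> Cinf W g \<and> (\<forall>x\<in>A \<inter> W. g x = f x))"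

definition pd :: "'n::finite \<Rightarrow> (real^'n \<Rightarrow> real) \<Rightarrow> real^'n \<Rightarrow> real" where
  "pd i f x = frechet_derivative f (at x) (axis i 1)"

definition halfsp :: "'n::finite \<Rightarrow> (real^'n) set" where
  "halfsp i0 = {x. 0 \<le> x $ i0}"

definition bdry :: "'n::finite \<Rightarrow> (real^'n) set" where
  "bdry i0 = {x. x $ i0 = 0}"

definition kd :: "'n \<Rightarrow> 'n \<Rightarrow> real" where
  "kd i j = (if i = j then 1 else 0)"

definition ldf :: "'n::finite \<Rightarrow> (real^'n) set \<Rightarrow> (real^'n \<Rightarrow> real) \<Rightarrow> bool" where
  "ldf i0 U \<rho> \<longleftrightarrow> openin (top_of_set (halfsp i0)) U \<and> smooth_upto U \<rho> \<and>
     (\<forall>x\<in>U. 0 \<le> \<rho> x) \<and> (\<forall>x\<in>U. \<rho> x = 0 \<longleftrightarrow> x \<in> bdry i0) \<and>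
     (\<forall>p\<in>U \<inter> bdry i0. \<exists>W g. open W \<and> p \<in> W \<and> Cinf W g \<and> (\<forall>x\<in>U \<inter> W. g x = \<rho> x)
         \<and> (\<exists>i. pd i g p \<noteq> 0))"

(* Christoffel symbols: \<Gamma> i j k = \<Gamma>^k_{ij}, i.e. \<nabla>_{\<partial>_i} \<partial>_j = \<Sum>k. \<Gamma>^k_{ij} \<partial>_k.
   Christoffel symbols of \<nabla> + d\<rho>/(\<alpha>\<rho>). *)
definition shiftconn :: "real \<Rightarrow> (real^'n \<Rightarrow> real) \<Rightarrow> ('n::finite \<Rightarrow> 'n \<Rightarrow> 'n \<Rightarrow> real^'n \<Rightarrow> real)
     \<Rightarrow> 'n \<Rightarrow> 'n \<Rightarrow> 'n \<Rightarrow> real^'n \<Rightarrow> real" where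
  "shiftconn \<alpha> \<rho> \<Gamma> i j k x =
     \<Gamma> i j k x + (kd k j * pd i \<rho> x + kd k i * pd j \<rho> x) / (\<alpha> * \<rho> x)"

(* curvature R_{ab}^c_d in coordinates: R(\<partial>_a,\<partial>_b)\<partial>_d = \<Sum>c. R_{ab}^c_d \<partial>_c *)
definition curv :: "('n::finite \<Rightarrow> 'n \<Rightarrow> 'n \<Rightarrow> real^'n \<Rightarrow> real) \<Rightarrow> 'n \<Rightarrow> 'n \<Rightarrow> 'n \<Rightarrow> 'n \<Rightarrow> real^'n \<Rightarrow> real" where
  "curv \<Gamma> a b c d x = pd a (\<Gamma> b d c) x - pd b (\<Gamma> a d c) x
     + (\<Sum>e\<in>UNIV. \<Gamma> a e c x * \<Gamma> b d e x - \<Gamma> b e c x * \<Gamma> a d e x)"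

definition proj_compact :: "'n::finite \<Rightarrow> (real^'n) set \<Rightarrow> real \<Rightarrow> ('n \<Rightarrow> 'n \<Rightarrow> 'n \<Rightarrow> real^'n \<Rightarrow> real) \<Rightarrow> bool" where
  "proj_compact i0 D \<alpha> \<Gamma> \<longleftrightarrow>
     (\<forall>p\<in>D \<inter> bdry i0. \<exists>W \<sigma>. W \<subseteq> D \<and> p \<in> W \<and> ldf i0 W \<sigma> \<and>
        (\<forall>i j k. \<exists>F. smooth_upto W F \<and> (\<forall>x\<in>W - bdry i0. F x = shiftconn \<alpha> \<sigma> \<Gamma> i j k x)))"

end

theory Submission
  imports Defs "HOL-Analysis.Analysis"
begin

lemma Cinf_D:
  assumes "Cinf S f"
  shows "\<exists>f'. (\<forall>x\<in>S. (f has_derivative f' x) (at x)) \<and> (\<forall>v. Cinf S (\<lambda>x. f' x v))"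
  using assms by (cases rule: Cinf.cases) auto

lemma Cinf_subset:
  assumes "Cinf S f" "T \<subseteq> S" shows "Cinf T f"
  using assms(1)
proof (coinduction arbitrary: f rule: Cinf.coinduct)
  case (Cinf f)
  then obtain f' where "\<forall>x\<in>S. (f has_derivative f' x) (at x)" "\<forall>v. Cinf S (\<lambda>x. f' x v)"
    using Cinf_D by blast
  then show ?case using assms(2) by blast
qed

lemma Cinf_cong:
  assumes "Cinf S f" "open S" "\<And>x. x \<in> S \<Longrightarrow> f x = g x" shows "Cinf S g"
  using assms(1,3)
proof (coinduction arbitrary: f g rule: Cinf.coinduct)
  case (Cinf f g)
  then obtain f' where f': "\<forall>x\<in>S. (f has_derivative f' x) (at x)" "\<forall>v. Cinf S (\<lambda>x. f' x v)"
    using Cinf_D by blast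
  have "\<forall>x\<in>S. (g has_derivative f' x) (at x)"
    using f'(1) Cinf(2) assms(2) by (metis has_derivative_transform_within_open)
  then show ?case using f'(2) by blast
qed

inductive_set Alg :: "'a::euclidean_space set \<Rightarrow> ('a \<Rightarrow> real) set" for S where
  base: "Cinf S f \<Longrightarrow> f \<in> Alg S"
| const: "(\<lambda>x. c) \<in> Alg S"
| inv: "Cinf S f \<Longrightarrow> (\<forall>x\<in>S. f x \<noteq> 0) \<Longrightarrow> (\<lambda>x. inverse (f x)) \<in> Alg S"
| add: "f \<in> Alg S \<Longrightarrow> g \<in> Alg S \<Longrightarrow> (\<lambda>x. f x + g x) \<in> Alg S"
| mult: "f \<in> Alg S \<Longrightarrow> g \<in> Alg S \<Longrightarrow> (\<lambda>x. f x * g x) \<in> Alg S"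

lemma Alg_deriv:
  assumes "h \<in> Alg S"
  shows "\<exists>h'. (\<forall>x\<in>S. (h has_derivative h' x) (at x)) \<and> (\<forall>v. (\<lambda>x. h' x v) \<in> Alg S)"
  using assms
proof induction
  case (base f)
  obtain f' where f': "\<forall>x\<in>S. (f has_derivative f' x) (at x)" "\<forall>v. Cinf S (\<lambda>x. f' x v)"
    using Cinf_D[OF base] by blast
  have "\<forall>v. (\<lambda>x. f' x v) \<in> Alg S"
  proof
    fix v show "(\<lambda>x. f' x v) \<in> Alg S" using f'(2) by (simp add: Alg.base)
  qed
  with f'(1) show ?case
    apply -
    apply (rule exI, rule conjI)
     apply assumption
    apply assumption
    done
next
  case (const c)
  show ?case by (rule exI[of _ "\<lambda>x v. 0"]) (simp add: Alg.const)
next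
  case (inv f)
  obtain f' where f': "\<forall>x\<in>S. (f has_derivative f' x) (at x)" "\<forall>v. Cinf S (\<lambda>x. f' x v)"
    using Cinf_D[OF inv(1)] by blast
  have "\<forall>x\<in>S. ((\<lambda>x. inverse (f x)) has_derivative (\<lambda>h. - (inverse (f x) * f' x h * inverse (f x)))) (at x)"
  proof
    fix x assume "x \<in> S"
    then show "((\<lambda>x. inverse (f x)) has_derivative (\<lambda>h. - (inverse (f x) * f' x h * inverse (f x)))) (at x)"
      using f'(1) inv(2) by (intro Deriv.has_derivative_inverse) auto
  qed
  moreover have "\<forall>v. (\<lambda>x. - (inverse (f x) * f' x v * inverse (f x))) \<in> Alg S"
  proof
    fix v
    have "(\<lambda>x. (-1) * ((inverse (f x) * f' x v) * inverse (f x))) \<in> Alg S"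
      by (intro Alg.mult Alg.const Alg.inv Alg.base inv f'(2)[rule_format])
    then show "(\<lambda>x. - (inverse (f x) * f' x v * inverse (f x))) \<in> Alg S" by simp
  qed
  ultimately show ?case
    apply -
    apply (rule exI, rule conjI)
     apply assumption
    apply assumption
    done
next
  case (add f g)
  obtain f' g' where A: "\<forall>x\<in>S. (f has_derivative f' x) (at x)" "\<forall>v. (\<lambda>x. f' x v) \<in> Alg S"
     "\<forall>x\<in>S. (g has_derivative g' x) (at x)" "\<forall>v. (\<lambda>x. g' x v) \<in> Alg S" using add(3,4) by blast
  have "\<forall>x\<in>S. ((\<lambda>x. f x + g x) has_derivative (\<lambda>v. f' x v + g' x v)) (at x)"
    using A by (simp add: has_derivative_add)
  moreover have "\<forall>v. (\<lambda>x. f' x v + g' x v) \<in> Alg S"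
    using A by (simp add: Alg.add)
  ultimately show ?case
    apply -
    apply (rule exI, rule conjI)
     apply assumption
    apply assumption
    done
next
  case (mult f g)
  obtain f' g' where A: "\<forall>x\<in>S. (f has_derivative f' x) (at x)" "\<forall>v. (\<lambda>x. f' x v) \<in> Alg S"
     "\<forall>x\<in>S. (g has_derivative g' x) (at x)" "\<forall>v. (\<lambda>x. g' x v) \<in> Alg S" using mult(3,4) by blast
  have "\<forall>x\<in>S. ((\<lambda>x. f x * g x) has_derivative (\<lambda>v. f x * g' x v + f' x v * g x)) (at x)"
    using A by (simp add: has_derivative_mult)
  moreover have "\<forall>v. (\<lambda>x. f x * g' x v + f' x v * g x) \<in> Alg S"
    using A mult(1,2) by (simp add: Alg.add Alg.mult)
  ultimately show ?case
    apply -
    apply (rule exI, rule conjI)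
     apply assumption
    apply assumption
    done
qed

lemma Alg_Cinf: assumes "h \<in> Alg S" shows "Cinf S h"
  apply (rule Cinf.coinduct[where X="\<lambda>h. h \<in> Alg S", OF assms])
  apply (drule Alg_deriv)
  apply (erule exE)
  apply (rule exI, rule exI, rule conjI, rule refl)
  apply (erule conjE)
  apply (rule conjI, assumption)
  apply (rule allI, rule disjI1)
  apply (erule allE, assumption)
  done

lemma Cinf_const: "Cinf S (\<lambda>x. c)" by (rule Alg_Cinf[OF Alg.const])
lemma Cinf_add: "Cinf S f \<Longrightarrow> Cinf S g \<Longrightarrow> Cinf S (\<lambda>x. f x + g x)"
  by (rule Alg_Cinf) (intro Alg.intros)
lemma Cinf_mult: "Cinf S f \<Longrightarrow> Cinf S g \<Longrightarrow> Cinf S (\<lambda>x. f x * g x)"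
  by (rule Alg_Cinf) (intro Alg.intros)
lemma Cinf_cmult: "Cinf S f \<Longrightarrow> Cinf S (\<lambda>x. c * f x)"
  by (rule Cinf_mult[OF Cinf_const])
lemma Cinf_minus: "Cinf S f \<Longrightarrow> Cinf S (\<lambda>x. - f x)"
  using Cinf_cmult[of S f "-1"] by simp
lemma Cinf_diff: "Cinf S f \<Longrightarrow> Cinf S g \<Longrightarrow> Cinf S (\<lambda>x. f x - g x)"
  using Cinf_add[OF _ Cinf_minus, of S f g] by simp
lemma Cinf_power: "Cinf S f \<Longrightarrow> Cinf S (\<lambda>x. f x ^ n)"
  by (induction n) (auto intro: Cinf_const Cinf_mult)
lemma Cinf_linear: assumes "bounded_linear L" shows "Cinf S L"
proof (rule Cinf.intros[of S L "\<lambda>x. L"])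
  show "\<forall>x\<in>S. (L has_derivative L) (at x)" using assms bounded_linear_imp_has_derivative by blast
  show "\<forall>v. Cinf S (\<lambda>x. L v)" by (auto intro: Cinf_const)
qed

lemma Cinf_has_derivative:
  assumes "Cinf S f" "x \<in> S" shows "(f has_derivative frechet_derivative f (at x)) (at x)"
  using Cinf_D[OF assms(1)] assms(2) frechet_derivative_at by metis

lemma Cinf_fd:
  assumes "Cinf S f" "open S" shows "Cinf S (\<lambda>x. frechet_derivative f (at x) v)"
proof -
  obtain f' where f': "\<forall>x\<in>S. (f has_derivative f' x) (at x)" "\<forall>v. Cinf S (\<lambda>x. f' x v)"
    using Cinf_D[OF assms(1)] by blast
  show ?thesis
    by (rule Cinf_cong[OF f'(2)[rule_format, of v] assms(2)]) (metis f'(1) frechet_derivative_at)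
qed

lemma Cinf_pd: "Cinf S f \<Longrightarrow> open S \<Longrightarrow> Cinf S (pd i f)"
  unfolding pd_def by (rule Cinf_fd)

lemma Cinf_continuous: assumes "Cinf S f" shows "continuous_on S f"
proof -
  obtain f' where f': "\<forall>x\<in>S. (f has_derivative f' x) (at x)"
    using Cinf_D[OF assms(1)] by blast
  then show ?thesis
    by (meson continuous_at_imp_continuous_on has_derivative_continuous)
qed

lemma Cinf_continuous_at: "Cinf S f \<Longrightarrow> x \<in> S \<Longrightarrow> isCont f x"
  using Cinf_D has_derivative_continuous by blast

lemma Cinf_inverse: "Cinf S f \<Longrightarrow> (\<And>x. x \<in> S \<Longrightarrow> f x \<noteq> 0) \<Longrightarrow> Cinf S (\<lambda>x. inverse (f x))"
  by (rule Alg_Cinf, rule Alg.inv, assumption, blast)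
lemma Cinf_divide: "Cinf S f \<Longrightarrow> Cinf S g \<Longrightarrow> (\<And>x. x \<in> S \<Longrightarrow> g x \<noteq> 0) \<Longrightarrow> Cinf S (\<lambda>x. f x / g x)"
  using Cinf_mult[OF _ Cinf_inverse, of S f g] by (simp add: divide_inverse)
lemma Cinf_sum: "finite I \<Longrightarrow> (\<And>i. i \<in> I \<Longrightarrow> Cinf S (f i)) \<Longrightarrow> Cinf S (\<lambda>x. \<Sum>i\<in>I. f i x)"
proof (induction I rule: finite_induct)
  case empty
  then show ?case using Cinf_const[of S 0] by simp
next
  case (insert i F)
  have "Cinf S (\<lambda>x. f i x + (\<Sum>i\<in>F. f i x))"
    by (rule Cinf_add) (use insert in auto)
  then show ?case using insert by simp
qed

lemma has_derivative_cong_open: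
  assumes "open V" "x \<in> V" "\<And>y. y \<in> V \<Longrightarrow> f y = g y"
  shows "(f has_derivative F) (at x) \<longleftrightarrow> (g has_derivative F) (at x)"
  using assms has_derivative_transform_within_open[of f F x UNIV V g]
    has_derivative_transform_within_open[of g F x UNIV V f] by auto

lemma fd_cong_open:
  assumes "open V" "x \<in> V" "\<And>y. y \<in> V \<Longrightarrow> f y = g y"
  shows "frechet_derivative f (at x) = frechet_derivative g (at x)"
proof -
  have "(\<lambda>F. (f has_derivative F) (at x)) = (\<lambda>F. (g has_derivative F) (at x))"
    using has_derivative_cong_open[OF assms] by auto
  then show ?thesis unfolding frechet_derivative_def by simp
qed

lemma pd_cong_open:
  assumes "open V" "x \<in> V" "\<And>y. y \<in> V \<Longrightarrow> f y = g y"
  shows "pd i f x = pd i g x"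
  unfolding pd_def using fd_cong_open[OF assms] by simp

lemma pd_at: "(f has_derivative f') (at x) \<Longrightarrow> pd i f x = f' (axis i 1)"
  unfolding pd_def by (metis frechet_derivative_at)

lemma bdry_limit_eq:
  fixes f1 f2 :: "real^'n \<Rightarrow> real"
  assumes c1: "isCont f1 p" and c2: "isCont f2 p" and p: "p $ i0 = 0" and e: "e > 0"
    and eq: "\<And>x. x \<in> ball p e \<Longrightarrow> x $ i0 > 0 \<Longrightarrow> f1 x = f2 x"
  shows "f1 p = f2 p"
proof -
  define \<gamma> where "\<gamma> = (\<lambda>t::real. p + t *\<^sub>R axis i0 1)"
  have g0: "\<gamma> 0 = p" by (simp add: \<gamma>_def)
  have cg: "isCont \<gamma> 0" unfolding \<gamma>_def by (intro continuous_intros)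
  have i1: "isCont (\<lambda>t. f1 (\<gamma> t)) 0" using isCont_o2[OF cg] c1 g0 by simp
  have i2: "isCont (\<lambda>t. f2 (\<gamma> t)) 0" using isCont_o2[OF cg] c2 g0 by simp
  have l1: "((\<lambda>t. f1 (\<gamma> t)) \<longlongrightarrow> f1 p) (at_right 0)"
    using i1 g0 unfolding isCont_def by (metis at_le subset_UNIV tendsto_mono)
  have l2: "((\<lambda>t. f2 (\<gamma> t)) \<longlongrightarrow> f2 p) (at_right 0)"
    using i2 g0 unfolding isCont_def by (metis at_le subset_UNIV tendsto_mono)
  have ev: "eventually (\<lambda>t. f1 (\<gamma> t) = f2 (\<gamma> t)) (at_right 0)"
  proof -
    have "eventually (\<lambda>t. t \<in> {0<..<e}) (at_right (0::real))"
      using e by (rule eventually_at_right_real)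
    then show ?thesis
    proof eventually_elim
      case (elim t)
      have "\<gamma> t \<in> ball p e" using elim by (simp add: \<gamma>_def dist_norm)
      moreover have "\<gamma> t $ i0 > 0" using elim p by (simp add: \<gamma>_def axis_def)
      ultimately show ?case using eq by blast
    qed
  qed
  have "((\<lambda>t. f2 (\<gamma> t)) \<longlongrightarrow> f1 p) (at_right 0)"
    using tendsto_cong[OF ev] l1 by blast
  then show ?thesis using l2 tendsto_unique[of "at_right (0::real)"] by (simp add: trivial_limit_at_right_real)
qed


lemma open_hb: "open {x::real^'n. x \<in> ball p e \<and> x $ i0 > 0}"
proof -
  have "open {x::real^'n. 0 < x $ i0}"
    by (rule open_Collect_less) (intro continuous_intros)+
  then have "open (ball p e \<inter> {x::real^'n. 0 < x $ i0})" by auto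
  moreover have "ball p e \<inter> {x::real^'n. 0 < x $ i0} = {x. x \<in> ball p e \<and> x $ i0 > 0}" by auto
  ultimately show ?thesis by simp
qed

lemma hb_pd_eq:
  assumes eq: "\<And>x. x \<in> ball p e \<Longrightarrow> x $ i0 > 0 \<Longrightarrow> f1 x = f2 x"
    and x: "x \<in> ball p e" "x $ i0 > 0"
  shows "pd i f1 x = pd i f2 x"
  by (rule pd_cong_open[OF open_hb[of p e i0]]) (use eq x in auto)

lemma bdry_Cinf_eq:
  fixes f1 f2 :: "real^'n \<Rightarrow> real"
  assumes c1: "Cinf W1 f1" "open W1" "p \<in> W1" and c2: "Cinf W2 f2" "open W2" "p \<in> W2"
    and p: "p $ i0 = 0" and e: "e > 0"
    and eq: "\<And>x. x \<in> ball p e \<Longrightarrow> x $ i0 > 0 \<Longrightarrow> f1 x = f2 x"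
  shows "f1 p = f2 p"
  by (rule bdry_limit_eq[OF Cinf_continuous_at[OF c1(1,3)] Cinf_continuous_at[OF c2(1,3)] p e eq])

lemma bdry_Cinf_pd_eq:
  fixes f1 f2 :: "real^'n \<Rightarrow> real"
  assumes c1: "Cinf W1 f1" "open W1" "p \<in> W1" and c2: "Cinf W2 f2" "open W2" "p \<in> W2"
    and p: "p $ i0 = 0" and e: "e > 0"
    and eq: "\<And>x. x \<in> ball p e \<Longrightarrow> x $ i0 > 0 \<Longrightarrow> f1 x = f2 x"
  shows "pd i f1 p = pd i f2 p"
  apply (rule bdry_Cinf_eq[OF Cinf_pd[OF c1(1,2)] c1(2,3) Cinf_pd[OF c2(1,2)] c2(2,3) p e])
  by (rule hb_pd_eq[OF eq])

definition yy :: "'n::finite \<Rightarrow> real^'n \<Rightarrow> real \<Rightarrow> real^'n" where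
  "yy i0 x t = x - ((1 - t) * x $ i0) *\<^sub>R axis i0 1"

lemma yy_ball:
  assumes p: "p $ i0 = 0" and x: "x \<in> ball p r" and t: "t \<in> {0..1}"
  shows "yy i0 x t \<in> ball p r"
proof -
  have "norm (yy i0 x t - p) \<le> norm (x - p)"
  proof (rule norm_le_componentwise_cart)
    fix j
    show "norm ((yy i0 x t - p) $ j) \<le> norm ((x - p) $ j)"
    proof (cases "j = i0")
      case True
      have "(yy i0 x t - p) $ j = t * x $ i0" using True p
        by (simp add: yy_def axis_def algebra_simps)
      moreover have "(x - p) $ j = x $ i0" using True p by simp
      moreover have "\<bar>t * x $ i0\<bar> \<le> \<bar>x $ i0\<bar>" using t
        by (simp add: abs_mult mult_left_le_one_le)
      ultimately show ?thesis by simp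
    next
      case False
      then show ?thesis by (simp add: yy_def axis_def)
    qed
  qed
  then show ?thesis using x by (simp add: dist_norm norm_minus_commute)
qed

lemma yy_linear: "bounded_linear (\<lambda>v. yy i0 v t)"
  unfolding yy_def
  by (auto intro!: bounded_linear_intros)

lemma yy_has_derivative: "((\<lambda>x. yy i0 x t) has_derivative (\<lambda>v. yy i0 v t)) F"
  by (rule bounded_linear_imp_has_derivative[OF yy_linear])

lemma yy_cont: "continuous_on S (\<lambda>z. yy i0 (fst z) (snd z))"
  unfolding yy_def by (intro continuous_intros)

lemma yy_t_deriv: "((\<lambda>t. yy i0 x t) has_vector_derivative (x $ i0 *\<^sub>R axis i0 1)) (at t within S)"
  unfolding yy_def has_vector_derivative_def
  by (auto intro!: derivative_eq_intros simp: algebra_simps)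

lemma yy_1: "yy i0 x 1 = x" by (simp add: yy_def)
lemma yy_0_coord: "yy i0 x 0 $ i0 = 0" by (simp add: yy_def axis_def)

lemma yy_sub: "yy i0 v t = v - ((1 - t) * v $ i0) *\<^sub>R axis i0 1" by (simp add: yy_def)


lemma cont_comp_yy:
  assumes c: "continuous_on (ball p r) \<phi>" and p: "p $ i0 = 0"
  shows "continuous_on (ball p r \<times> {0..1}) (\<lambda>z. \<phi> (yy i0 (fst z) (snd z)))"
  by (rule continuous_on_compose2[OF c yy_cont]) (auto intro: yy_ball[OF p])

lemma gen_deriv:
  fixes \<psi> :: "real^'n \<Rightarrow> real"
  assumes \<psi>: "Cinf (ball p r) \<psi>" and p: "p $ i0 = 0" and x0: "x0 \<in> ball p r"
  shows "((\<lambda>x. integral {0..1} (\<lambda>t. t^k * \<psi> (yy i0 x t))) has_derivative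
          (\<lambda>v. integral {0..1} (\<lambda>t. t^k * frechet_derivative \<psi> (at (yy i0 x0 t)) (yy i0 v t)))) (at x0)"
proof -
  let ?U = "ball p r"
  let ?D = "\<lambda>z. frechet_derivative \<psi> (at z)"
  have hd: "z \<in> ?U \<Longrightarrow> (\<psi> has_derivative ?D z) (at z)" for z using Cinf_has_derivative[OF \<psi>] .
  have bl: "z \<in> ?U \<Longrightarrow> bounded_linear (?D z)" for z using hd has_derivative_bounded_linear by blast
  define F where "F x t = (\<lambda>v. t^k * ?D (yy i0 x t) (yy i0 v t))" for x t
  define fx where "fx x t = Blinfun (F x t)" for x t
  have blF: "bounded_linear (F x t)" if "x \<in> ?U" "t \<in> {0..1}" for x t
  proof -
    have "bounded_linear (\<lambda>v. ?D (yy i0 x t) (yy i0 v t))"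
      using bounded_linear_compose[OF bl[OF yy_ball[OF p that]] yy_linear] .
    then show ?thesis unfolding F_def by (rule bounded_linear_compose[OF bounded_linear_mult_right])
  qed
  have fxa: "blinfun_apply (fx x t) = F x t" if "x \<in> ?U" "t \<in> {0..1}" for x t
    using blF[OF that] by (simp add: fx_def bounded_linear_Blinfun_apply)
  have deriv: "((\<lambda>x. t^k * \<psi> (yy i0 x t)) has_derivative blinfun_apply (fx x t)) (at x within ?U)"
    if x: "x \<in> ?U" and t: "t \<in> cbox 0 1" for x t
  proof -
    have t': "t \<in> {0..1}" using t by simp
    have "((\<lambda>x. \<psi> (yy i0 x t)) has_derivative (\<lambda>v. ?D (yy i0 x t) (yy i0 v t))) (at x within ?U)"
      using has_derivative_compose[OF yy_has_derivative hd[OF yy_ball[OF p x t']]] by simp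
    then have "((\<lambda>x. t^k * \<psi> (yy i0 x t)) has_derivative (\<lambda>v. t^k * ?D (yy i0 x t) (yy i0 v t))) (at x within ?U)"
      by (rule has_derivative_mult_right)
    then show ?thesis using fxa[OF x t'] by (simp add: F_def)
  qed
  have cpsi: "continuous_on ?U \<psi>" using Cinf_continuous[OF \<psi>] .
  have integ: "(\<lambda>t. t^k * \<psi> (yy i0 x t)) integrable_on cbox 0 1" if x: "x \<in> ?U" for x
  proof -
    have "continuous_on {0..1} (\<lambda>t. \<psi> (yy i0 x t))"
    proof (rule continuous_on_compose2[OF cpsi])
      show "continuous_on {0..1} (\<lambda>t. yy i0 x t)" unfolding yy_def by (intro continuous_intros)
      show "(\<lambda>t. yy i0 x t) ` {0..1} \<subseteq> ?U" using yy_ball[OF p x] by auto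
    qed
    then have "continuous_on {0..1} (\<lambda>t. t^k * \<psi> (yy i0 x t))" by (intro continuous_intros)
    then show ?thesis by (simp add: integrable_continuous_real)
  qed
  have cF: "continuous_on (?U \<times> {0..1}) (\<lambda>z. F (fst z) (snd z) b)" for b
  proof -
    have cd: "continuous_on ?U (\<lambda>z. ?D z v)" for v
      using Cinf_continuous[OF Cinf_fd[OF \<psi> open_ball]] .
    have C: "continuous_on (?U \<times> {0..1}) (\<lambda>z. snd z ^ k * (?D (yy i0 (fst z) (snd z)) b
              - ((1 - snd z) * b $ i0) * ?D (yy i0 (fst z) (snd z)) (axis i0 1)))"
      by (intro continuous_intros cont_comp_yy[OF cd p])
    have Eq: "F (fst z) (snd z) b = snd z ^ k * (?D (yy i0 (fst z) (snd z)) b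
              - ((1 - snd z) * b $ i0) * ?D (yy i0 (fst z) (snd z)) (axis i0 1))"
      if "z \<in> ?U \<times> {0..1}" for z
    proof -
      have bz: "bounded_linear (?D (yy i0 (fst z) (snd z)))"
        using bl[OF yy_ball[OF p]] that by (auto simp: mem_Times_iff)
      show ?thesis unfolding F_def yy_sub[of i0 b "snd z"]
        using linear_diff[OF bounded_linear.linear[OF bz]] linear_scale[OF bounded_linear.linear[OF bz]]
        by simp
    qed
    show ?thesis by (rule continuous_on_cong[THEN iffD2, OF refl Eq C])
  qed
  have cont: "continuous_on (?U \<times> cbox 0 1) (\<lambda>(x, t). fx x t)"
  proof (rule continuous_on_blinfun_componentwise)
    fix b :: "real^'n"
    show "continuous_on (?U \<times> cbox 0 1) (\<lambda>z. blinfun_apply (case z of (x, t) \<Rightarrow> fx x t) b)"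
      apply (rule continuous_on_cong[THEN iffD2, OF _ _ cF[of b]])
      by (auto simp: fxa split: prod.splits)
  qed
  have L: "((\<lambda>x. integral (cbox 0 1) (\<lambda>t. t^k * \<psi> (yy i0 x t))) has_derivative integral (cbox 0 1) (fx x0)) (at x0 within ?U)"
    by (rule leibniz_rule[where f="\<lambda>x t. t^k * \<psi> (yy i0 x t)", OF deriv integ cont x0 convex_ball])
  then have L': "((\<lambda>x. integral {0..1} (\<lambda>t. t^k * \<psi> (yy i0 x t))) has_derivative integral (cbox 0 1) (fx x0)) (at x0)"
    by (simp add: at_within_open[OF x0 open_ball])
  have "continuous_on (cbox 0 1) (\<lambda>t. (\<lambda>(x, t). fx x t) (x0, t))"
    by (rule continuous_on_compose2[OF cont]) (auto intro!: continuous_intros x0)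
  then have cfx: "continuous_on (cbox 0 1) (fx x0)" by simp
  have intfx: "fx x0 integrable_on cbox 0 1" using integrable_continuous[OF cfx] .
  have "blinfun_apply (integral (cbox 0 1) (fx x0)) = (\<lambda>v. integral (cbox 0 1) (\<lambda>t. fx x0 t v))"
    by (rule ext, rule blinfun_apply_integral[OF intfx])
  also have "\<dots> = (\<lambda>v. integral {0..1} (\<lambda>t. t^k * ?D (yy i0 x0 t) (yy i0 v t)))"
    by (rule ext, simp, rule integral_cong) (simp add: fxa[OF x0] F_def)
  finally show ?thesis using L' by simp
qed


lemma yy_integrable:
  fixes \<phi> :: "real^'n \<Rightarrow> real"
  assumes c: "continuous_on (ball p r) \<phi>" and p: "p $ i0 = 0" and x: "x \<in> ball p r"
  shows "(\<lambda>t. t^k * \<phi> (yy i0 x t)) integrable_on {0..1}"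
proof -
  have "continuous_on {0..1} (\<lambda>t. \<phi> (yy i0 x t))"
  proof (rule continuous_on_compose2[OF c])
    show "continuous_on {0..1} (\<lambda>t. yy i0 x t)" unfolding yy_def by (intro continuous_intros)
    show "(\<lambda>t. yy i0 x t) ` {0..1} \<subseteq> ball p r" using yy_ball[OF p x] by auto
  qed
  then have "continuous_on {0..1} (\<lambda>t. t^k * \<phi> (yy i0 x t))" by (intro continuous_intros)
  then show ?thesis by (simp add: integrable_continuous_real)
qed

inductive_set HT :: "'n::finite \<Rightarrow> real^'n \<Rightarrow> real \<Rightarrow> (real^'n \<Rightarrow> real) set" for i0 p r where
  gen: "Cinf (ball p r) \<psi> \<Longrightarrow> (\<lambda>x. integral {0..1} (\<lambda>t. t^k * \<psi> (yy i0 x t))) \<in> HT i0 p r"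
| add: "f \<in> HT i0 p r \<Longrightarrow> g \<in> HT i0 p r \<Longrightarrow> (\<lambda>x. f x + g x) \<in> HT i0 p r"
| cmul: "f \<in> HT i0 p r \<Longrightarrow> (\<lambda>x. c * f x) \<in> HT i0 p r"

lemma HT_deriv:
  assumes p: "p $ i0 = 0" and f: "f \<in> HT i0 p r"
  shows "\<exists>f'. (\<forall>x\<in>ball p r. (f has_derivative f' x) (at x)) \<and> (\<forall>v. (\<lambda>x. f' x v) \<in> HT i0 p r)"
  using f
proof induction
  case (gen \<psi> k)
  let ?I = "\<lambda>\<phi> k x. integral {0..1} (\<lambda>t. t^k * \<phi> (yy i0 x t))"
  let ?P = "\<lambda>v z. frechet_derivative \<psi> (at z) v"
  let ?e = "axis i0 1"
  define f' where "f' x v = ?I (?P v) k x + (- v $ i0) * ?I (?P ?e) k x + v $ i0 * ?I (?P ?e) (Suc k) x" for x v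
  have cP: "Cinf (ball p r) (?P v)" for v using Cinf_fd[OF gen open_ball] .
  have ctP: "continuous_on (ball p r) (?P v)" for v using Cinf_continuous[OF cP] .
  have "((\<lambda>x. ?I \<psi> k x) has_derivative f' x) (at x)" if x: "x \<in> ball p r" for x
  proof -
    have eq: "(\<lambda>v. integral {0..1} (\<lambda>t. t^k * frechet_derivative \<psi> (at (yy i0 x t)) (yy i0 v t))) = f' x"
    proof
      fix v
      have "integral {0..1} (\<lambda>t. t^k * frechet_derivative \<psi> (at (yy i0 x t)) (yy i0 v t))
          = integral {0..1} (\<lambda>t. t^k * ?P v (yy i0 x t) + ((- v $ i0) * (t^k * ?P ?e (yy i0 x t))
               + v $ i0 * (t^(Suc k) * ?P ?e (yy i0 x t))))"
      proof (rule integral_cong)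
        fix t :: real assume t: "t \<in> {0..1}"
        have bz: "bounded_linear (frechet_derivative \<psi> (at (yy i0 x t)))"
          using Cinf_has_derivative[OF gen yy_ball[OF p x t]] has_derivative_bounded_linear by blast
        show "t^k * frechet_derivative \<psi> (at (yy i0 x t)) (yy i0 v t) =
             t^k * ?P v (yy i0 x t) + ((- v $ i0) * (t^k * ?P ?e (yy i0 x t))
               + v $ i0 * (t^(Suc k) * ?P ?e (yy i0 x t)))"
        proof -
          have L: "frechet_derivative \<psi> (at (yy i0 x t)) (v - ((1 - t) * v $ i0) *\<^sub>R axis i0 1)
             = frechet_derivative \<psi> (at (yy i0 x t)) v - ((1 - t) * v $ i0) * frechet_derivative \<psi> (at (yy i0 x t)) (axis i0 1)"
            using linear_diff[OF bounded_linear.linear[OF bz]] linear_scale[OF bounded_linear.linear[OF bz]]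
            by simp
          show ?thesis unfolding yy_sub[of i0 v t] L by (simp add: algebra_simps)
        qed
      qed
      also have "\<dots> = f' x v"
        unfolding f'_def
        by (subst integral_add, (intro yy_integrable[OF ctP p x] integrable_on_mult_right integrable_add)+,
            subst integral_add, (intro yy_integrable[OF ctP p x] integrable_on_mult_right)+, simp)
      finally show "integral {0..1} (\<lambda>t. t^k * frechet_derivative \<psi> (at (yy i0 x t)) (yy i0 v t)) = f' x v" .
    qed
    show ?thesis using gen_deriv[OF gen p x, of k] unfolding eq .
  qed
  moreover have "(\<lambda>x. f' x v) \<in> HT i0 p r" for v
    unfolding f'_def by (intro HT.add HT.cmul HT.gen cP)
  ultimately show ?case
    apply -
    apply (rule exI[of _ f'], rule conjI)
     apply blast
    apply blast
    done
next
  case (add f g)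
  then obtain f' g' where A: "\<forall>x\<in>ball p r. (f has_derivative f' x) (at x)" "\<forall>v. (\<lambda>x. f' x v) \<in> HT i0 p r"
     "\<forall>x\<in>ball p r. (g has_derivative g' x) (at x)" "\<forall>v. (\<lambda>x. g' x v) \<in> HT i0 p r" by blast
  have "\<forall>x\<in>ball p r. ((\<lambda>x. f x + g x) has_derivative (\<lambda>v. f' x v + g' x v)) (at x)"
    using A by (simp add: has_derivative_add)
  moreover have "\<forall>v. (\<lambda>x. f' x v + g' x v) \<in> HT i0 p r"
    using A by (simp add: HT.add)
  ultimately show ?case
    apply -
    apply (rule exI, rule conjI)
     apply assumption
    apply assumption
    done
next
  case (cmul f c)
  then obtain f' where A: "\<forall>x\<in>ball p r. (f has_derivative f' x) (at x)" "\<forall>v. (\<lambda>x. f' x v) \<in> HT i0 p r"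
    by blast
  have "\<forall>x\<in>ball p r. ((\<lambda>x. c * f x) has_derivative (\<lambda>v. c * f' x v)) (at x)"
    using A by (simp add: has_derivative_mult_right)
  moreover have "\<forall>v. (\<lambda>x. c * f' x v) \<in> HT i0 p r"
    using A by (simp add: HT.cmul)
  ultimately show ?case
    apply -
    apply (rule exI, rule conjI)
     apply assumption
    apply assumption
    done
qed

lemma HT_Cinf: assumes p: "p $ i0 = 0" and h: "h \<in> HT i0 p r" shows "Cinf (ball p r) h"
  apply (rule Cinf.coinduct[where X="\<lambda>h. h \<in> HT i0 p r", OF h])
  apply (drule HT_deriv[OF p])
  apply (erule exE)
  apply (rule exI, rule exI, rule conjI, rule refl)
  apply (erule conjE)
  apply (rule conjI, assumption)
  apply (rule allI, rule disjI1)
  apply (erule allE, assumption)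
  done


lemma hadamard:
  fixes g :: "real^'n \<Rightarrow> real"
  assumes g: "Cinf (ball p r) g" and p: "p $ i0 = 0"
    and z: "\<And>x. x \<in> ball p r \<Longrightarrow> x $ i0 = 0 \<Longrightarrow> g x = 0"
  shows "\<exists>h. Cinf (ball p r) h \<and> (\<forall>x\<in>ball p r. g x = x $ i0 * h x) \<and> h p = pd i0 g p"
proof -
  let ?\<phi> = "\<lambda>z. frechet_derivative g (at z) (axis i0 1)"
  define h where "h x = integral {0..1} (\<lambda>t. t^0 * ?\<phi> (yy i0 x t))" for x
  have hC: "Cinf (ball p r) h" unfolding h_def
    by (rule HT_Cinf[OF p HT.gen[OF Cinf_fd[OF g open_ball]]])
  have cphi: "continuous_on (ball p r) ?\<phi>" using Cinf_continuous[OF Cinf_fd[OF g open_ball]] .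
  have "g x = x $ i0 * h x" if x: "x \<in> ball p r" for x
  proof -
    have vd: "((\<lambda>t. g (yy i0 x t)) has_vector_derivative (x $ i0 * ?\<phi> (yy i0 x t))) (at t within {0..1})"
      if t: "t \<in> {0..1}" for t
    proof -
      have hd: "(g has_derivative frechet_derivative g (at (yy i0 x t))) (at (yy i0 x t))"
        using Cinf_has_derivative[OF g yy_ball[OF p x t]] .
      have bz: "bounded_linear (frechet_derivative g (at (yy i0 x t)))"
        using hd has_derivative_bounded_linear by blast
      have "((g \<circ> (\<lambda>t. yy i0 x t)) has_vector_derivative frechet_derivative g (at (yy i0 x t)) (x $ i0 *\<^sub>R axis i0 1)) (at t within {0..1})"
        by (rule vector_derivative_diff_chain_within[OF yy_t_deriv has_derivative_subset[OF hd]]) simp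
      moreover have "frechet_derivative g (at (yy i0 x t)) (x $ i0 *\<^sub>R axis i0 1) = x $ i0 * ?\<phi> (yy i0 x t)"
        using linear_scale[OF bounded_linear.linear[OF bz]] by simp
      ultimately show ?thesis by (simp add: o_def)
    qed
    have "((\<lambda>t. x $ i0 * ?\<phi> (yy i0 x t)) has_integral (g (yy i0 x 1) - g (yy i0 x 0))) {0..1}"
      by (rule fundamental_theorem_of_calculus) (use vd in auto)
    moreover have "g (yy i0 x 0) = 0"
      using z[OF yy_ball[OF p x] yy_0_coord] by simp
    ultimately have I1: "((\<lambda>t. x $ i0 * ?\<phi> (yy i0 x t)) has_integral g x) {0..1}"
      by (simp add: yy_1)
    have "((\<lambda>t. t^0 * ?\<phi> (yy i0 x t)) has_integral h x) {0..1}"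
      unfolding h_def by (rule integrable_integral[OF yy_integrable[OF cphi p x]])
    then have "((\<lambda>t. x $ i0 * ?\<phi> (yy i0 x t)) has_integral x $ i0 * h x) {0..1}"
      using has_integral_mult_right[of _ "h x" "{0..1}" "x $ i0"] by simp
    then show ?thesis using I1 has_integral_unique by blast
  qed
  moreover have "h p = pd i0 g p"
  proof -
    have "yy i0 p t = p" for t using p by (simp add: yy_def)
    then have "h p = ?\<phi> p" by (simp add: h_def)
    then show ?thesis by (simp add: pd_def)
  qed
  ultimately show ?thesis using hC by blast
qed

lemma line_mvt:
  fixes g :: "real^'n \<Rightarrow> real"
  assumes h: "h > 0"
    and d: "\<And>s. s \<in> {0..h} \<Longrightarrow> (g has_derivative D (z + s *\<^sub>R v)) (at (z + s *\<^sub>R v))"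
  shows "\<exists>\<xi>. 0 < \<xi> \<and> \<xi> < h \<and> g (z + h *\<^sub>R v) - g z = h * D (z + \<xi> *\<^sub>R v) v"
proof -
  define k where "k s = g (z + s *\<^sub>R v)" for s
  have kd: "(k has_real_derivative D (z + s *\<^sub>R v) v) (at s)" if s: "s \<in> {0..h}" for s
  proof -
    have l: "((\<lambda>s. z + s *\<^sub>R v) has_derivative (\<lambda>t. t *\<^sub>R v)) (at s)"
      by (auto intro!: derivative_eq_intros)
    have c: "(k has_derivative (\<lambda>t. D (z + s *\<^sub>R v) (t *\<^sub>R v))) (at s)"
      unfolding k_def using has_derivative_compose[OF l d[OF s]] by simp
    have bl: "bounded_linear (D (z + s *\<^sub>R v))" using d[OF s] has_derivative_bounded_linear by blast
    have "(\<lambda>t. D (z + s *\<^sub>R v) (t *\<^sub>R v)) = (*) (D (z + s *\<^sub>R v) v)"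
      using linear_scale[OF bounded_linear.linear[OF bl]] by (auto simp: mult.commute)
    then show ?thesis using c by (simp add: has_field_derivative_def)
  qed
  have cont: "continuous_on {0..h} k"
    using kd by (meson DERIV_isCont continuous_at_imp_continuous_on)
  obtain l \<xi> where m: "0 < \<xi>" "\<xi> < h" "DERIV k \<xi> :> l" "k h - k 0 = (h - 0) * l"
    using MVT[OF h cont] kd by (metis atLeastAtMost_iff less_eq_real_def real_differentiable_def)
  have "l = D (z + \<xi> *\<^sub>R v) v" using DERIV_unique[OF m(3) kd] m(1,2) by auto
  then show ?thesis using m by (intro exI[of _ \<xi>]) (simp add: k_def)
qed


lemma norm_two_axis:
  "norm (s *\<^sub>R axis a (1::real) + t *\<^sub>R axis b 1 :: real^'n) \<le> \<bar>s\<bar> + \<bar>t\<bar>"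
  using norm_triangle_ineq[of "s *\<^sub>R axis a (1::real) :: real^'n" "t *\<^sub>R axis b 1"] by simp

lemma clairaut:
  fixes f :: "real^'n \<Rightarrow> real"
  assumes f: "Cinf S f" and S: "open S" and x: "x \<in> S"
  shows "pd a (pd b f) x = pd b (pd a f) x"
proof (rule ccontr)
  let ?u = "axis a 1 :: real^'n"
  let ?w = "axis b 1 :: real^'n"
  let ?A = "pd a (pd b f)"
  let ?B = "pd b (pd a f)"
  assume ne: "?A x \<noteq> ?B x"
  define \<epsilon> where "\<epsilon> = \<bar>?A x - ?B x\<bar> / 2"
  have \<epsilon>: "\<epsilon> > 0" using ne by (simp add: \<epsilon>_def)
  have fa: "Cinf S (pd a f)" and fb: "Cinf S (pd b f)" using Cinf_pd[OF f S] by auto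
  have cA: "Cinf S ?A" and cB: "Cinf S ?B" using Cinf_pd[OF fb S] Cinf_pd[OF fa S] by auto
  obtain d1 where d1: "d1 > 0" "\<forall>z. dist z x < d1 \<longrightarrow> dist (?A z) (?A x) < \<epsilon>"
    using Cinf_continuous_at[OF cA x] \<epsilon> unfolding continuous_at_eps_delta by blast
  obtain d2 where d2: "d2 > 0" "\<forall>z. dist z x < d2 \<longrightarrow> dist (?B z) (?B x) < \<epsilon>"
    using Cinf_continuous_at[OF cB x] \<epsilon> unfolding continuous_at_eps_delta by blast
  obtain d0 where d0: "d0 > 0" "ball x d0 \<subseteq> S" using S x open_contains_ball by blast
  define \<delta> where "\<delta> = min d0 (min d1 d2)"
  define h where "h = \<delta> / 3"
  have \<delta>: "\<delta> > 0" using d0 d1 d2 by (simp add: \<delta>_def)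
  have h: "h > 0" using \<delta> by (simp add: h_def)
  have inS: "x + s *\<^sub>R axis c 1 + t *\<^sub>R axis e 1 \<in> S \<and> dist (x + s *\<^sub>R axis c 1 + t *\<^sub>R axis e 1) x < \<delta>"
    if "0 \<le> s" "s \<le> h" "0 \<le> t" "t \<le> h" for s t c e
  proof -
    have "dist (x + s *\<^sub>R axis c 1 + t *\<^sub>R axis e 1) x = norm (s *\<^sub>R axis c (1::real) + t *\<^sub>R axis e 1)"
      by (simp add: dist_norm algebra_simps)
    also have "\<dots> \<le> \<bar>s\<bar> + \<bar>t\<bar>" by (rule norm_two_axis)
    also have "\<dots> < \<delta>" using that h by (simp add: h_def)
    finally have "dist (x + s *\<^sub>R axis c 1 + t *\<^sub>R axis e 1) x < \<delta>" .
    moreover then have "x + s *\<^sub>R axis c 1 + t *\<^sub>R axis e 1 \<in> ball x d0"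
      by (simp add: \<delta>_def dist_commute)
    ultimately show ?thesis using d0 by auto
  qed
  have hd: "\<And>z. z \<in> S \<Longrightarrow> (g has_derivative frechet_derivative g (at z)) (at z)" if "Cinf S g" for g
    using Cinf_has_derivative[OF that] .
  have expand: "\<exists>p. dist p x < \<delta> \<and>
      f (x + h *\<^sub>R axis c 1 + h *\<^sub>R axis e 1) - f (x + h *\<^sub>R axis c 1) - f (x + h *\<^sub>R axis e 1) + f x
        = h * (h * pd e (pd c f) p)" for c e
  proof -
    let ?c = "axis c 1 :: real^'n" and ?e = "axis e 1 :: real^'n"
    define g1 where "g1 y = f (y + h *\<^sub>R ?e) - f y" for y
    define D1 where "D1 y = (\<lambda>v. frechet_derivative f (at (y + h *\<^sub>R ?e)) v - frechet_derivative f (at y) v)" for y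
    have "\<exists>\<xi>. 0 < \<xi> \<and> \<xi> < h \<and> g1 (x + h *\<^sub>R ?c) - g1 x = h * D1 (x + \<xi> *\<^sub>R ?c) ?c"
    proof (rule line_mvt[OF h])
      fix s assume s: "s \<in> {0..h}"
      have p1: "x + s *\<^sub>R ?c \<in> S" using inS[of s 0 c e] s h by auto
      have p2: "x + s *\<^sub>R ?c + h *\<^sub>R ?e \<in> S" using inS[of s h c e] s h by auto
      have a1: "((\<lambda>y. y + h *\<^sub>R ?e) has_derivative (\<lambda>v. v)) (at (x + s *\<^sub>R ?c))"
        by (auto intro!: derivative_eq_intros)
      have "((\<lambda>y. f (y + h *\<^sub>R ?e)) has_derivative frechet_derivative f (at (x + s *\<^sub>R ?c + h *\<^sub>R ?e))) (at (x + s *\<^sub>R ?c))"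
        using has_derivative_compose[OF a1 hd[OF f p2]] by simp
      then show "(g1 has_derivative D1 (x + s *\<^sub>R ?c)) (at (x + s *\<^sub>R ?c))"
        unfolding g1_def D1_def by (rule has_derivative_diff[OF _ hd[OF f p1]])
    qed
    then obtain \<xi> where \<xi>: "0 < \<xi>" "\<xi> < h" "g1 (x + h *\<^sub>R ?c) - g1 x = h * D1 (x + \<xi> *\<^sub>R ?c) ?c" by blast
    have "\<exists>\<eta>. 0 < \<eta> \<and> \<eta> < h \<and> pd c f ((x + \<xi> *\<^sub>R ?c) + h *\<^sub>R ?e) - pd c f (x + \<xi> *\<^sub>R ?c)
            = h * frechet_derivative (pd c f) (at ((x + \<xi> *\<^sub>R ?c) + \<eta> *\<^sub>R ?e)) ?e"
    proof (rule line_mvt[OF h])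
      fix s assume s: "s \<in> {0..h}"
      have "x + \<xi> *\<^sub>R ?c + s *\<^sub>R ?e \<in> S" using inS[of \<xi> s c e] s \<xi> by auto
      then show "(pd c f has_derivative frechet_derivative (pd c f) (at (x + \<xi> *\<^sub>R ?c + s *\<^sub>R ?e))) (at (x + \<xi> *\<^sub>R ?c + s *\<^sub>R ?e))"
        using hd[OF Cinf_pd[OF f S]] by blast
    qed
    then obtain \<eta> where \<eta>: "0 < \<eta>" "\<eta> < h" "pd c f ((x + \<xi> *\<^sub>R ?c) + h *\<^sub>R ?e) - pd c f (x + \<xi> *\<^sub>R ?c)
            = h * frechet_derivative (pd c f) (at ((x + \<xi> *\<^sub>R ?c) + \<eta> *\<^sub>R ?e)) ?e" by blast
    have "D1 (x + \<xi> *\<^sub>R ?c) ?c = pd c f ((x + \<xi> *\<^sub>R ?c) + h *\<^sub>R ?e) - pd c f (x + \<xi> *\<^sub>R ?c)"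
      by (simp add: D1_def pd_def)
    then have "f (x + h *\<^sub>R ?c + h *\<^sub>R ?e) - f (x + h *\<^sub>R ?c) - f (x + h *\<^sub>R ?e) + f x
        = h * (h * pd e (pd c f) (x + \<xi> *\<^sub>R ?c + \<eta> *\<^sub>R ?e))"
      using \<xi>(3) \<eta>(3) by (simp add: g1_def pd_def[of e] algebra_simps)
    moreover have "dist (x + \<xi> *\<^sub>R ?c + \<eta> *\<^sub>R ?e) x < \<delta>" using inS[of \<xi> \<eta> c e] \<xi> \<eta> by auto
    ultimately show ?thesis by blast
  qed
  obtain p1 where p1: "dist p1 x < \<delta>"
    "f (x + h *\<^sub>R ?u + h *\<^sub>R ?w) - f (x + h *\<^sub>R ?u) - f (x + h *\<^sub>R ?w) + f x = h * (h * ?B p1)"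
    using expand[of a b] by blast
  obtain p2 where p2: "dist p2 x < \<delta>"
    "f (x + h *\<^sub>R ?w + h *\<^sub>R ?u) - f (x + h *\<^sub>R ?w) - f (x + h *\<^sub>R ?u) + f x = h * (h * ?A p2)"
    using expand[of b a] by blast
  have "h * (h * ?B p1) = h * (h * ?A p2)" using p1(2) p2(2) by (simp add: algebra_simps)
  then have eq: "?B p1 = ?A p2" using h by simp
  have "dist (?A p2) (?A x) < \<epsilon>" using d1 p2(1) by (simp add: \<delta>_def)
  moreover have "dist (?B p1) (?B x) < \<epsilon>" using d2 p1(1) by (simp add: \<delta>_def)
  ultimately have "\<bar>?A x - ?B x\<bar> < 2 * \<epsilon>" using eq by (simp add: dist_real_def)
  then show False by (simp add: \<epsilon>_def)
qed

lemma pd_Cinf: "Cinf S f \<Longrightarrow> x \<in> S \<Longrightarrow> pd i f x = frechet_derivative f (at x) (axis i 1)"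
  by (simp add: pd_def)

lemma pd_mult_Cinf:
  assumes "Cinf S f" "Cinf S g" "x \<in> S"
  shows "pd i (\<lambda>y. f y * g y) x = f x * pd i g x + pd i f x * g x"
  using pd_at[OF has_derivative_mult[OF Cinf_has_derivative[OF assms(1,3)] Cinf_has_derivative[OF assms(2,3)]]]
  by (simp add: pd_def)

lemma has_derivative_coord: "((\<lambda>y::real^'n. y $ j) has_derivative (\<lambda>v. v $ j)) (at x)"
  by (rule bounded_linear_imp_has_derivative) (auto intro!: bounded_linear_intros)

lemma Cinf_coord: "Cinf S (\<lambda>y::real^'n. y $ j)"
  by (rule Cinf_linear) (auto intro!: bounded_linear_intros)

lemma pd_coord_mult:
  assumes "Cinf S h" "x \<in> S"
  shows "pd i (\<lambda>y. y $ j * h y) x = x $ j * pd i h x + (if i = j then 1 else 0) * h x"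
  using pd_mult_Cinf[OF Cinf_coord[of S j] assms(1) assms(2), of i] pd_at[OF has_derivative_coord[of j x], of i]
  by (simp add: axis_def)

lemma openin_halfsp_ball:
  assumes "openin (top_of_set (halfsp i0)) U" "p \<in> U"
  shows "\<exists>e>0. \<forall>x\<in>ball p e. 0 \<le> x $ i0 \<longrightarrow> x \<in> U"
proof -
  obtain T where T: "open T" "U = halfsp i0 \<inter> T" using assms(1) by (auto simp: openin_open)
  obtain e where "e > 0" "ball p e \<subseteq> T" using T assms(2) open_contains_ball by blast
  then show ?thesis using T by (auto simp: halfsp_def)
qed

lemma open_minus_bdry:
  assumes "openin (top_of_set (halfsp i0)) U"
  shows "open (U - bdry i0)"
proof -
  obtain T where T: "open T" "U = halfsp i0 \<inter> T" using assms(1) by (auto simp: openin_open)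
  have "U - bdry i0 = T \<inter> {x. 0 < x $ i0}" using T by (auto simp: halfsp_def bdry_def)
  moreover have "open {x. 0 < (x::(real,_) vec) $ i0}"
    by (rule open_Collect_less) (intro continuous_intros)+
  ultimately show ?thesis using T(1) by auto
qed

lemma choice3:
  assumes "\<And>i j k. \<exists>W f. Q i j k W f"
  shows "\<exists>Wf Ff. \<forall>i j k. Q i j k (Wf i j k) (Ff i j k)"
proof -
  define Wf where "Wf i j k = fst (SOME z. Q i j k (fst z) (snd z))" for i j k
  define Ff where "Ff i j k = snd (SOME z. Q i j k (fst z) (snd z))" for i j k
  have "Q i j k (Wf i j k) (Ff i j k)" for i j k
  proof -
    have "\<exists>z. Q i j k (fst z) (snd z)" using assms[of i j k] by (metis fst_conv snd_conv)
    then show ?thesis unfolding Wf_def Ff_def by (rule someI_ex)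
  qed
  then show ?thesis by blast
qed

lemma choice3':
  assumes "\<And>i j k. \<exists>f. Q i j k f"
  shows "\<exists>Ff. \<forall>i j k. Q i j k (Ff i j k)"
proof -
  define Ff where "Ff i j k = (SOME z. Q i j k z)" for i j k
  have "Q i j k (Ff i j k)" for i j k unfolding Ff_def by (rule someI_ex[OF assms])
  then show ?thesis by blast
qed


lemma nondeg_factor:
  fixes g0 h g' :: "real^'n \<Rightarrow> real"
  assumes g0: "Cinf (ball p r0) g0" and r0: "r0 > 0" and p: "p $ i0 = 0"
    and fac: "\<forall>x\<in>ball p r0. g0 x = x $ i0 * h x" and h: "Cinf (ball p r0) h"
    and W': "open W'" "p \<in> W'" "Cinf W' g'" and nd: "pd i g' p \<noteq> 0"
    and eq: "\<And>x. x \<in> ball p r0 \<Longrightarrow> 0 < x $ i0 \<Longrightarrow> x \<in> W' \<Longrightarrow> g0 x = g' x"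
  shows "h p \<noteq> 0"
proof
  assume h0: "h p = 0"
  obtain e' where e': "e' > 0" "ball p e' \<subseteq> W'" using W'(1,2) open_contains_ball by blast
  define e where "e = min r0 e'"
  have e: "e > 0" using r0 e' by (simp add: e_def)
  have "pd i g0 p = pd i g' p"
    by (rule bdry_Cinf_pd_eq[OF g0 open_ball _ W'(3,1,2) p e]) (use r0 e' eq in \<open>auto simp: e_def\<close>)
  moreover have "pd i g0 p = pd i (\<lambda>y. y $ i0 * h y) p"
    by (rule pd_cong_open[OF open_ball]) (use r0 fac in auto)
  moreover have "\<dots> = 0" using pd_coord_mult[OF h, of p i i0] r0 p h0 by simp
  ultimately show False using nd by simp
qed

lemma local_data:
  fixes i0 :: "'n::finite" and D U :: "(real^'n) set"
    and \<Gamma> :: "'n \<Rightarrow> 'n \<Rightarrow> 'n \<Rightarrow> real^'n \<Rightarrow> real"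
    and \<alpha> :: real and \<rho> :: "real^'n \<Rightarrow> real"
  assumes alpha_pos: "0 < \<alpha>" and pc: "proj_compact i0 D \<alpha> \<Gamma>"
    and UD: "U \<subseteq> D" and rho: "ldf i0 U \<rho>"
    and pU: "p \<in> U" and pb: "p \<in> bdry i0"
  shows "\<exists>r>0. \<exists>g G. Cinf (ball p r) g \<and> (\<forall>x\<in>ball p r. 0 \<le> x $ i0 \<longrightarrow> x \<in> U \<and> g x = \<rho> x)
     \<and> (\<forall>i j k. Cinf (ball p r) (G i j k))
     \<and> (\<forall>i j k. \<forall>x\<in>ball p r. 0 < x $ i0 \<longrightarrow> G i j k x = shiftconn \<alpha> \<rho> \<Gamma> i j k x)"
proof -
  have p0: "p $ i0 = 0" using pb by (simp add: bdry_def)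
  obtain W1 \<sigma> where W1: "W1 \<subseteq> D" "p \<in> W1" "ldf i0 W1 \<sigma>"
    and FF: "\<forall>i j k. \<exists>F. smooth_upto W1 F \<and> (\<forall>x\<in>W1 - bdry i0. F x = shiftconn \<alpha> \<sigma> \<Gamma> i j k x)"
  proof -
    have "p \<in> D \<inter> bdry i0" using pU pb UD by auto
    from pc[unfolded proj_compact_def, rule_format, OF this] show ?thesis using that by blast
  qed
  obtain Fc where Fc: "\<forall>i j k. smooth_upto W1 (Fc i j k) \<and> (\<forall>x\<in>W1 - bdry i0. Fc i j k x = shiftconn \<alpha> \<sigma> \<Gamma> i j k x)"
  proof -
    have "\<exists>Fc. \<forall>i j k. smooth_upto W1 (Fc i j k) \<and> (\<forall>x\<in>W1 - bdry i0. Fc i j k x = shiftconn \<alpha> \<sigma> \<Gamma> i j k x)"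
      apply (rule choice3'[where Q="\<lambda>i j k F. smooth_upto W1 F \<and> (\<forall>x\<in>W1 - bdry i0. F x = shiftconn \<alpha> \<sigma> \<Gamma> i j k x)"])
      using FF by blast
    then show ?thesis using that by blast
  qed
  have ex4: "\<exists>W f. open W \<and> p \<in> W \<and> Cinf W f \<and> (\<forall>x\<in>W1 \<inter> W. f x = Fc i j k x)" for i j k
  proof -
    have "smooth_upto W1 (Fc i j k)" using Fc by blast
    then show ?thesis using W1(2) unfolding smooth_upto_def by blast
  qed
  obtain Wf Ff where WF: "\<forall>i j k. open (Wf i j k) \<and> p \<in> Wf i j k \<and> Cinf (Wf i j k) (Ff i j k)
      \<and> (\<forall>x\<in>W1 \<inter> Wf i j k. Ff i j k x = Fc i j k x)"
  proof -
    have "\<exists>Wf Ff. \<forall>i j k. open (Wf i j k) \<and> p \<in> Wf i j k \<and> Cinf (Wf i j k) (Ff i j k)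
      \<and> (\<forall>x\<in>W1 \<inter> Wf i j k. Ff i j k x = Fc i j k x)"
      apply (rule choice3[where Q="\<lambda>i j k W f. open W \<and> p \<in> W \<and> Cinf W f \<and> (\<forall>x\<in>W1 \<inter> W. f x = Fc i j k x)"])
      using ex4 by blast
    then show ?thesis using that by blast
  qed
  define W4 where "W4 = (\<Inter>i. \<Inter>j. \<Inter>k. Wf i j k)"
  have W4: "open W4" "p \<in> W4" unfolding W4_def using WF by (auto intro!: open_INT)
  obtain W2 g0 where W2: "open W2" "p \<in> W2" "Cinf W2 g0" "\<forall>x\<in>U \<inter> W2. g0 x = \<rho> x"
    using rho pU unfolding ldf_def smooth_upto_def by blast
  obtain W3 s0 where W3: "open W3" "p \<in> W3" "Cinf W3 s0" "\<forall>x\<in>W1 \<inter> W3. s0 x = \<sigma> x"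
    using W1(2,3) unfolding ldf_def smooth_upto_def by blast
  obtain e1 where e1: "e1 > 0" "\<forall>x\<in>ball p e1. 0 \<le> x $ i0 \<longrightarrow> x \<in> U"
    using openin_halfsp_ball[OF _ pU] rho unfolding ldf_def by blast
  obtain e2 where e2: "e2 > 0" "\<forall>x\<in>ball p e2. 0 \<le> x $ i0 \<longrightarrow> x \<in> W1"
    using openin_halfsp_ball[OF _ W1(2)] W1(3) unfolding ldf_def by blast
  obtain e3 where e3: "e3 > 0" "ball p e3 \<subseteq> W2 \<inter> W3 \<inter> W4"
    using open_contains_ball[of "W2 \<inter> W3 \<inter> W4"] W2 W3 W4 by blast
  define r0 where "r0 = min e1 (min e2 e3)"
  have r0: "r0 > 0" using e1 e2 e3 by (simp add: r0_def)
  have inb: "x \<in> W2 \<and> x \<in> W3 \<and> x \<in> Wf i j k" if "x \<in> ball p r0" for x i j k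
    using that e3 by (auto simp: r0_def W4_def)
  have inU: "x \<in> U \<and> x \<in> W1" if "x \<in> ball p r0" "0 \<le> x $ i0" for x
    using that e1 e2 by (auto simp: r0_def)
  have rhoz: "\<forall>x\<in>U. \<rho> x = 0 \<longleftrightarrow> x \<in> bdry i0" using rho by (simp add: ldf_def)
  have sigz: "\<forall>x\<in>W1. \<sigma> x = 0 \<longleftrightarrow> x \<in> bdry i0" using W1(3) by (simp add: ldf_def)
  have g0b: "Cinf (ball p r0) g0" using Cinf_subset[OF W2(3)] inb by blast
  have s0b: "Cinf (ball p r0) s0" using Cinf_subset[OF W3(3)] inb by blast
  obtain hg where hg: "Cinf (ball p r0) hg" "\<forall>x\<in>ball p r0. g0 x = x $ i0 * hg x"
  proof -
    have "\<exists>h. Cinf (ball p r0) h \<and> (\<forall>x\<in>ball p r0. g0 x = x $ i0 * h x) \<and> h p = pd i0 g0 p"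
    proof (rule hadamard[OF g0b p0])
      fix x assume x: "x \<in> ball p r0" "x $ i0 = 0"
      then have "x \<in> U" "x \<in> W2" using inU[of x] inb[of x] by auto
      then show "g0 x = 0" using W2(4) rhoz x by (auto simp: bdry_def)
    qed
    then show ?thesis using that by blast
  qed
  obtain hs where hs: "Cinf (ball p r0) hs" "\<forall>x\<in>ball p r0. s0 x = x $ i0 * hs x"
  proof -
    have "\<exists>h. Cinf (ball p r0) h \<and> (\<forall>x\<in>ball p r0. s0 x = x $ i0 * h x) \<and> h p = pd i0 s0 p"
    proof (rule hadamard[OF s0b p0])
      fix x assume x: "x \<in> ball p r0" "x $ i0 = 0"
      then have "x \<in> W1" "x \<in> W3" using inU[of x] inb[of x] by auto
      then show "s0 x = 0" using W3(4) sigz x by (auto simp: bdry_def)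
    qed
    then show ?thesis using that by blast
  qed
  have hgp: "hg p \<noteq> 0"
  proof -
    obtain W' g' i where ndg: "open W'" "p \<in> W'" "Cinf W' g'" "\<forall>x\<in>U \<inter> W'. g' x = \<rho> x" "pd i g' p \<noteq> 0"
      using rho pU pb unfolding ldf_def by blast
    show ?thesis
    proof (rule nondeg_factor[OF g0b r0 p0 hg(2) hg(1) ndg(1,2,3,5)])
      fix x assume x: "x \<in> ball p r0" "0 < x $ i0" "x \<in> W'"
      then show "g0 x = g' x" using inU[of x] inb[of x] W2(4) ndg(4) by auto
    qed
  qed
  have hsp: "hs p \<noteq> 0"
  proof -
    obtain W' g' i where ndg: "open W'" "p \<in> W'" "Cinf W' g'" "\<forall>x\<in>W1 \<inter> W'. g' x = \<sigma> x" "pd i g' p \<noteq> 0"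
      using W1(2,3) pb unfolding ldf_def by blast
    show ?thesis
    proof (rule nondeg_factor[OF s0b r0 p0 hs(2) hs(1) ndg(1,2,3,5)])
      fix x assume x: "x \<in> ball p r0" "0 < x $ i0" "x \<in> W'"
      then show "s0 x = g' x" using inU[of x] inb[of x] W3(4) ndg(4) by auto
    qed
  qed
  have pr0: "p \<in> ball p r0" using r0 by simp
  obtain d1 where d1: "d1 > 0" "\<forall>y. dist p y < d1 \<longrightarrow> hg y \<noteq> 0"
    using continuous_at_avoid[OF Cinf_continuous_at[OF hg(1) pr0] hgp] by blast
  obtain d2 where d2: "d2 > 0" "\<forall>y. dist p y < d2 \<longrightarrow> hs y \<noteq> 0"
    using continuous_at_avoid[OF Cinf_continuous_at[OF hs(1) pr0] hsp] by blast
  define r where "r = min r0 (min d1 d2)"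
  have r: "r > 0" using r0 d1 d2 by (simp add: r_def)
  have rsub: "ball p r \<subseteq> ball p r0" by (simp add: r_def subset_ball)
  have nz: "hg x \<noteq> 0 \<and> hs x \<noteq> 0" if "x \<in> ball p r" for x using that d1 d2 by (simp add: r_def)
  define u where "u x = hg x / hs x" for x
  have uC: "Cinf (ball p r) u" unfolding u_def
    by (rule Cinf_divide[OF Cinf_subset[OF hg(1) rsub] Cinf_subset[OF hs(1) rsub]]) (use nz in auto)
  have unz: "u x \<noteq> 0" if "x \<in> ball p r" for x using nz[OF that] by (simp add: u_def)
  define G where "G i j k x = Ff i j k x + (kd k j * (pd i u x / u x) + kd k i * (pd j u x / u x)) / \<alpha>" for i j k x
  have GC: "Cinf (ball p r) (G i j k)" for i j k
  proof -
    have F1: "Cinf (ball p r) (Ff i j k)" using Cinf_subset[of "Wf i j k" "Ff i j k" "ball p r"] WF inb rsub by blast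
    have pdu: "Cinf (ball p r) (\<lambda>x. pd m u x / u x)" for m
      by (rule Cinf_divide[OF Cinf_pd[OF uC open_ball] uC unz])
    have F2: "Cinf (ball p r) (\<lambda>x. (kd k j * (pd i u x / u x) + kd k i * (pd j u x / u x)) / \<alpha>)"
      by (rule Cinf_divide[OF Cinf_add[OF Cinf_cmult[OF pdu] Cinf_cmult[OF pdu]] Cinf_const]) (use alpha_pos in auto)
    show ?thesis unfolding G_def by (rule Cinf_add[OF F1 F2])
  qed
  have Geq: "G i j k x = shiftconn \<alpha> \<rho> \<Gamma> i j k x" if x: "x \<in> ball p r" "0 < x $ i0" for i j k x
  proof -
    define V where "V = {y. y \<in> ball p r \<and> 0 < y $ i0}"
    have V: "open V" "x \<in> V" using open_hb[of p r i0] x by (auto simp: V_def)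
    have xr0: "x \<in> ball p r0" using x rsub by auto
    have xW1: "x \<in> W1 - bdry i0" using inU[OF xr0] x by (auto simp: bdry_def)
    have Fx: "Ff i j k x = shiftconn \<alpha> \<sigma> \<Gamma> i j k x"
      using WF Fc xW1 inb[OF xr0] by auto
    have Vprop: "\<sigma> y = s0 y \<and> \<rho> y = u y * s0 y" if "y \<in> V" for y
    proof -
      have y: "y \<in> ball p r0" "0 \<le> y $ i0" "y \<in> ball p r" using that rsub by (auto simp: V_def)
      have "\<sigma> y = s0 y" using W3(4) inU[OF y(1,2)] inb[OF y(1)] by auto
      moreover have "\<rho> y = g0 y" using W2(4) inU[OF y(1,2)] inb[OF y(1)] by auto
      moreover have "g0 y = u y * s0 y" using hg(2) hs(2) y nz[OF y(3)] by (simp add: u_def)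
      ultimately show ?thesis by simp
    qed
    have s0V: "Cinf V s0" by (rule Cinf_subset[OF s0b]) (use rsub in \<open>auto simp: V_def\<close>)
    have uV: "Cinf V u" by (rule Cinf_subset[OF uC]) (auto simp: V_def)
    have ps: "pd m \<sigma> x = pd m s0 x" for m
      by (rule pd_cong_open[OF V]) (use Vprop in auto)
    have pr: "pd m \<rho> x = u x * pd m s0 x + pd m u x * s0 x" for m
    proof -
      have "pd m \<rho> x = pd m (\<lambda>y. u y * s0 y) x"
        by (rule pd_cong_open[OF V]) (use Vprop in auto)
      also have "\<dots> = u x * pd m s0 x + pd m u x * s0 x" by (rule pd_mult_Cinf[OF uV s0V V(2)])
      finally show ?thesis .
    qed
    have sx: "\<sigma> x = s0 x" "\<rho> x = u x * s0 x" using Vprop[OF V(2)] by auto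
    have s0nz: "s0 x \<noteq> 0" using hs(2) xr0 x nz[OF x(1)] by auto
    have ux: "u x \<noteq> 0" using unz[OF x(1)] .
    show ?thesis
      unfolding G_def Fx shiftconn_def ps pr sx
      using s0nz ux alpha_pos by (simp add: field_simps)
  qed
  show ?thesis
    apply (rule exI[of _ r], rule conjI[OF r])
    apply (rule exI[of _ g0], rule exI[of _ G])
    using Cinf_subset[OF g0b rsub] GC Geq W2(4) inU inb rsub by blast
qed

lemma kd_sym: "kd i j = kd j i" by (simp add: kd_def)
lemma kd_sum_l[simp]: "(\<Sum>e\<in>UNIV. kd (c::'n::finite) e * f e) = (f c :: real)"
proof -
  have "(\<Sum>e\<in>UNIV. kd c e * f e) = (\<Sum>e\<in>UNIV. if c = e then f e else 0)"
    by (rule sum.cong) (auto simp: kd_def)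
  then show ?thesis by simp
qed
lemma kd_sum_r[simp]: "(\<Sum>e\<in>UNIV. kd e (c::'n::finite) * f e) = (f c :: real)"
  using kd_sum_l[of c f] by (simp add: kd_sym)

lemma S1:
  fixes gp :: "'n::finite \<Rightarrow> real"
  defines "Kp \<equiv> \<lambda>i j k. kd k j * gp i + kd k i * gp j"
  shows "Kp b d c * gp a - Kp a d c * gp b = kd c b * gp a * gp d - kd c a * gp b * gp d"
  unfolding Kp_def by (simp add: algebra_simps)

lemma S2:
  fixes gp :: "'n::finite \<Rightarrow> real"
  defines "Kp \<equiv> \<lambda>i j k. kd k j * gp i + kd k i * gp j"
  shows "(\<Sum>e\<in>UNIV. Kp a e c * Kp b d e - Kp b e c * Kp a d e) = kd c a * gp b * gp d - kd c b * gp a * gp d"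
proof -
  have "(\<Sum>e\<in>UNIV. Kp a e c * Kp b d e - Kp b e c * Kp a d e) =
     (\<Sum>e\<in>UNIV. kd c e * (kd e d * gp a * gp b + kd e b * gp a * gp d - kd e d * gp b * gp a - kd e a * gp b * gp d))
     + (\<Sum>e\<in>UNIV. kd e d * (kd c a * gp e * gp b - kd c b * gp e * gp a))
     + (\<Sum>e\<in>UNIV. kd e b * (kd c a * gp e * gp d)) - (\<Sum>e\<in>UNIV. kd e a * (kd c b * gp e * gp d))"
    unfolding Kp_def sum.distrib[symmetric] sum_subtractf[symmetric]
    by (rule sum.cong) (simp_all add: algebra_simps)
  also have "\<dots> = kd c a * gp b * gp d - kd c b * gp a * gp d"
    by (simp only: kd_sum_l kd_sum_r) (simp add: kd_def algebra_simps)
  finally show ?thesis .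
qed


lemma S3:
  fixes gp :: "'n::finite \<Rightarrow> real" and Gp :: "'n \<Rightarrow> 'n \<Rightarrow> 'n \<Rightarrow> real"
  defines "Kp \<equiv> \<lambda>i j k. kd k j * gp i + kd k i * gp j"
  shows "(\<Sum>e\<in>UNIV. Gp a e c * Kp b d e + Kp a e c * Gp b d e - Gp b e c * Kp a d e - Kp b e c * Gp a d e)
    = (Gp a b c - Gp b a c) * gp d + kd c a * (\<Sum>e\<in>UNIV. Gp b d e * gp e) - kd c b * (\<Sum>e\<in>UNIV. Gp a d e * gp e)"
proof -
  have "(\<Sum>e\<in>UNIV. Gp a e c * Kp b d e + Kp a e c * Gp b d e - Gp b e c * Kp a d e - Kp b e c * Gp a d e)
    = (\<Sum>e\<in>UNIV. kd e d * (Gp a e c * gp b - Gp b e c * gp a)) + (\<Sum>e\<in>UNIV. kd e b * (Gp a e c * gp d))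
      - (\<Sum>e\<in>UNIV. kd e a * (Gp b e c * gp d)) + (\<Sum>e\<in>UNIV. kd c e * (gp a * Gp b d e - gp b * Gp a d e))
      + kd c a * (\<Sum>e\<in>UNIV. Gp b d e * gp e) - kd c b * (\<Sum>e\<in>UNIV. Gp a d e * gp e)"
    unfolding Kp_def sum_distrib_left sum.distrib[symmetric] sum_subtractf[symmetric]
    by (rule sum.cong) (simp_all add: algebra_simps)
  also have "\<dots> = (Gp a b c - Gp b a c) * gp d + kd c a * (\<Sum>e\<in>UNIV. Gp b d e * gp e) - kd c b * (\<Sum>e\<in>UNIV. Gp a d e * gp e)"
    by (simp only: kd_sum_l kd_sum_r) (simp add: algebra_simps)
  finally show ?thesis .
qed

lemma pd_add_Cinf:
  assumes "Cinf S f" "Cinf S g" "x \<in> S"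
  shows "pd i (\<lambda>y. f y + g y) x = pd i f x + pd i g x"
  using pd_at[OF has_derivative_add[OF Cinf_has_derivative[OF assms(1,3)] Cinf_has_derivative[OF assms(2,3)]]]
  by (simp add: pd_def)

lemma pd_diff_Cinf:
  assumes "Cinf S f" "Cinf S g" "x \<in> S"
  shows "pd i (\<lambda>y. f y - g y) x = pd i f x - pd i g x"
  using pd_at[OF has_derivative_diff[OF Cinf_has_derivative[OF assms(1,3)] Cinf_has_derivative[OF assms(2,3)]]]
  by (simp add: pd_def)

lemma pd_cmult_Cinf:
  assumes "Cinf S f" "x \<in> S"
  shows "pd i (\<lambda>y. c * f y) x = c * pd i f x"
  using pd_at[OF has_derivative_mult_right[OF Cinf_has_derivative[OF assms(1,2)]]]
  by (simp add: pd_def)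

lemma pd_divide_Cinf:
  assumes "Cinf S f" "Cinf S g" "x \<in> S" "g x \<noteq> 0"
  shows "pd i (\<lambda>y. f y / g y) x = (pd i f x * g x - f x * pd i g x) / (g x)^2"
  using pd_at[OF has_derivative_divide[OF Cinf_has_derivative[OF assms(1,3)] Cinf_has_derivative[OF assms(2,3)] assms(4)]]
  using assms(4) by (simp add: pd_def field_simps power2_eq_square)

lemma Cinf_curv:
  fixes \<Gamma> :: "'n::finite \<Rightarrow> 'n \<Rightarrow> 'n \<Rightarrow> real^'n \<Rightarrow> real"
  assumes "open V" "\<And>i j k. Cinf V (\<Gamma> i j k)"
  shows "Cinf V (curv \<Gamma> a b c d)"
proof -
  have "Cinf V (\<lambda>x. pd a (\<Gamma> b d c) x - pd b (\<Gamma> a d c) x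
     + (\<Sum>e\<in>UNIV. \<Gamma> a e c x * \<Gamma> b d e x - \<Gamma> b e c x * \<Gamma> a d e x))"
    by (intro Cinf_add Cinf_diff Cinf_sum Cinf_mult Cinf_pd assms) simp
  then show ?thesis unfolding curv_def[abs_def] by simp
qed

lemma curv_id2:
  fixes \<Gamma> H :: "'n::finite \<Rightarrow> 'n \<Rightarrow> 'n \<Rightarrow> real^'n \<Rightarrow> real"
  assumes V: "open V" "x \<in> V" and g: "Cinf V g" and H: "\<And>i j k. Cinf V (H i j k)"
    and gnz: "\<And>y. y \<in> V \<Longrightarrow> g y \<noteq> 0"
    and GH: "\<And>i j k y. y \<in> V \<Longrightarrow> \<Gamma> i j k y = H i j k y / g y"
  shows "(g x)^2 * curv \<Gamma> a b c d x =
    g x * (pd a (H b d c) x - pd b (H a d c) x) - (H b d c x * pd a g x - H a d c x * pd b g x)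
    + (\<Sum>e\<in>UNIV. H a e c x * H b d e x - H b e c x * H a d e x)"
proof -
  have pdG: "pd m (\<Gamma> i j k) x = (pd m (H i j k) x * g x - H i j k x * pd m g x) / (g x)^2" for m i j k
  proof -
    have "pd m (\<Gamma> i j k) x = pd m (\<lambda>y. H i j k y / g y) x"
      by (rule pd_cong_open[OF V]) (use GH in auto)
    also have "\<dots> = (pd m (H i j k) x * g x - H i j k x * pd m g x) / (g x)^2"
      by (rule pd_divide_Cinf[OF H g V(2) gnz[OF V(2)]])
    finally show ?thesis .
  qed
  have gx: "g x \<noteq> 0" using gnz V by blast
  have sum: "(\<Sum>e\<in>UNIV. \<Gamma> a e c x * \<Gamma> b d e x - \<Gamma> b e c x * \<Gamma> a d e x)
      = (\<Sum>e\<in>UNIV. H a e c x * H b d e x - H b e c x * H a d e x) / (g x)^2"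
    unfolding sum_divide_distrib
    by (rule sum.cong) (use gx in \<open>simp_all add: GH[OF V(2)] field_simps power2_eq_square\<close>)
  show ?thesis
    unfolding curv_def pdG sum using gx
    by (simp add: field_simps power2_eq_square)
qed


lemma curv_id1:
  fixes \<Gamma> G :: "'n::finite \<Rightarrow> 'n \<Rightarrow> 'n \<Rightarrow> real^'n \<Rightarrow> real"
  assumes V: "open V" "x \<in> V" and g: "Cinf V g" and G: "\<And>i j k. Cinf V (G i j k)"
    and gnz: "\<And>y. y \<in> V \<Longrightarrow> g y \<noteq> 0"
    and GG: "\<And>i j k y. y \<in> V \<Longrightarrow> \<Gamma> i j k y = G i j k y - (kd k j * pd i g y + kd k i * pd j g y) / g y"
  shows "g x * curv \<Gamma> a b c d x =
    g x * (pd a (G b d c) x - pd b (G a d c) x + (\<Sum>e\<in>UNIV. G a e c x * G b d e x - G b e c x * G a d e x))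
    - (pd a (\<lambda>y. kd c d * pd b g y + kd c b * pd d g y) x - pd b (\<lambda>y. kd c d * pd a g y + kd c a * pd d g y) x
       + (\<Sum>e\<in>UNIV. G a e c x * (kd e d * pd b g x + kd e b * pd d g x)
                  + (kd c e * pd a g x + kd c a * pd e g x) * G b d e x
                  - G b e c x * (kd e d * pd a g x + kd e a * pd d g x)
                  - (kd c e * pd b g x + kd c b * pd e g x) * G a d e x))"
proof -
  define K where "K i j k y = kd k j * pd i g y + kd k i * pd j g y" for i j k y
  have KC: "Cinf V (K i j k)" for i j k unfolding K_def[abs_def]
    by (intro Cinf_add Cinf_cmult Cinf_pd g V(1))
  have gx: "g x \<noteq> 0" using gnz V by blast
  have pdG: "pd m (\<Gamma> i j k) x = pd m (G i j k) x - (pd m (K i j k) x * g x - K i j k x * pd m g x) / (g x)^2"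
    for m i j k
  proof -
    have KgC: "Cinf V (\<lambda>y. K i j k y / g y)" by (rule Cinf_divide[OF KC g gnz])
    have "pd m (\<Gamma> i j k) x = pd m (\<lambda>y. G i j k y - K i j k y / g y) x"
      by (rule pd_cong_open[OF V]) (use GG in \<open>auto simp: K_def\<close>)
    also have "\<dots> = pd m (G i j k) x - pd m (\<lambda>y. K i j k y / g y) x"
      by (rule pd_diff_Cinf[OF G KgC V(2)])
    also have "pd m (\<lambda>y. K i j k y / g y) x = (pd m (K i j k) x * g x - K i j k x * pd m g x) / (g x)^2"
      by (rule pd_divide_Cinf[OF KC g V(2) gx])
    finally show ?thesis .
  qed
  have Gx: "\<Gamma> i j k x = G i j k x - K i j k x / g x" for i j k using GG[OF V(2)] by (simp add: K_def)
  have sum: "(\<Sum>e\<in>UNIV. \<Gamma> a e c x * \<Gamma> b d e x - \<Gamma> b e c x * \<Gamma> a d e x)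
      = (\<Sum>e\<in>UNIV. G a e c x * G b d e x - G b e c x * G a d e x)
        - (\<Sum>e\<in>UNIV. G a e c x * K b d e x + K a e c x * G b d e x - G b e c x * K a d e x - K b e c x * G a d e x) / g x
        + (\<Sum>e\<in>UNIV. K a e c x * K b d e x - K b e c x * K a d e x) / (g x)^2"
    unfolding sum_divide_distrib sum_subtractf[symmetric] sum.distrib[symmetric]
    by (rule sum.cong) (use gx in \<open>simp_all add: Gx field_simps power2_eq_square\<close>)
  have s1: "K b d c x * pd a g x - K a d c x * pd b g x = kd c b * pd a g x * pd d g x - kd c a * pd b g x * pd d g x"
    using S1[where gp="\<lambda>e. pd e g x" and a=a and b=b and c=c and d=d] by (simp add: K_def)
  have s2: "(\<Sum>e\<in>UNIV. K a e c x * K b d e x - K b e c x * K a d e x) = kd c a * pd b g x * pd d g x - kd c b * pd a g x * pd d g x"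
    using S2[where gp="\<lambda>e. pd e g x" and a=a and b=b and c=c and d=d] by (simp add: K_def)
  have z: "(\<Sum>e\<in>UNIV. K a e c x * K b d e x - K b e c x * K a d e x) = - (K b d c x * pd a g x - K a d c x * pd b g x)"
    using s1 s2 by simp
  have Kabs: "(\<lambda>y. kd c d * pd b g y + kd c b * pd d g y) = K b d c" "(\<lambda>y. kd c d * pd a g y + kd c a * pd d g y) = K a d c"
    by (auto simp: K_def)
  show ?thesis
    unfolding curv_def pdG sum z Kabs
    apply (simp only: K_def[symmetric])
    using gx by (simp add: field_simps power2_eq_square)
qed

definition ext_fun :: "'n::finite \<Rightarrow> (real^'n \<Rightarrow> real) \<Rightarrow> real^'n \<Rightarrow> real" where
  "ext_fun i0 Phi x = (if x \<in> bdry i0 then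
     (SOME v. \<exists>r f. r > 0 \<and> Cinf (ball x r) f \<and> (\<forall>y\<in>ball x r. 0 < y $ i0 \<longrightarrow> f y = Phi y) \<and> v = f x)
     else Phi x)"

lemma ext_unique:
  fixes f1 f2 :: "real^'n::finite \<Rightarrow> real"
  assumes p: "p $ i0 = 0"
    and f1: "r1 > 0" "Cinf (ball p r1) f1" "\<forall>y\<in>ball p r1. 0 < y $ i0 \<longrightarrow> f1 y = Phi y"
    and f2: "r2 > 0" "Cinf (ball p r2) f2" "\<forall>y\<in>ball p r2. 0 < y $ i0 \<longrightarrow> f2 y = Phi y"
  shows "f1 p = f2 p"
proof (rule bdry_Cinf_eq[OF f1(2) open_ball _ f2(2) open_ball _ p])
  show "p \<in> ball p r1" "p \<in> ball p r2" using f1 f2 by auto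
  show "0 < min r1 r2" using f1 f2 by simp
  fix x assume "x \<in> ball p (min r1 r2)" "0 < x $ i0"
  then show "f1 x = f2 x" using f1(3) f2(3) by auto
qed

lemma ext_val:
  fixes f :: "real^'n::finite \<Rightarrow> real"
  assumes pb: "p \<in> bdry i0" and r: "r > 0" and f: "Cinf (ball p r) f"
    and eq: "\<forall>y\<in>ball p r. 0 < y $ i0 \<longrightarrow> f y = Phi y"
  shows "ext_fun i0 Phi p = f p"
proof -
  have p: "p $ i0 = 0" using pb by (simp add: bdry_def)
  let ?P = "\<lambda>v. \<exists>r f. r > 0 \<and> Cinf (ball p r) f \<and> (\<forall>y\<in>ball p r. 0 < y $ i0 \<longrightarrow> f y = Phi y) \<and> v = f p"
  have "?P (f p)" using r f eq by blast
  then have "?P (SOME v. ?P v)" by (rule someI)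
  then obtain r' f' where f': "r' > 0" "Cinf (ball p r') f'" "\<forall>y\<in>ball p r'. 0 < y $ i0 \<longrightarrow> f' y = Phi y"
    "(SOME v. ?P v) = f' p" by blast
  have "f' p = f p" by (rule ext_unique[OF p f'(1,2,3) r f eq])
  then show ?thesis using pb f'(4) by (simp add: ext_fun_def)
qed

lemma ext_smooth:
  fixes Phi :: "real^'n::finite \<Rightarrow> real"
  assumes U: "openin (top_of_set (halfsp i0)) U"
    and int: "\<forall>p\<in>U - bdry i0. \<exists>W f. open W \<and> p \<in> W \<and> W \<subseteq> U - bdry i0 \<and> Cinf W f \<and> (\<forall>x\<in>W. f x = Phi x)"
    and bd: "\<forall>p\<in>U \<inter> bdry i0. \<exists>r f. r > 0 \<and> Cinf (ball p r) f \<and> (\<forall>y\<in>ball p r. 0 < y $ i0 \<longrightarrow> f y = Phi y)"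
  shows "smooth_upto U (ext_fun i0 Phi)"
  unfolding smooth_upto_def
proof
  fix p assume pU: "p \<in> U"
  have Uh: "U \<subseteq> halfsp i0" using openin_subset[OF U] by simp
  show "\<exists>W g. open W \<and> p \<in> W \<and> Cinf W g \<and> (\<forall>x\<in>U \<inter> W. g x = ext_fun i0 Phi x)"
  proof (cases "p \<in> bdry i0")
    case True
    then obtain r f where rf: "r > 0" "Cinf (ball p r) f" "\<forall>y\<in>ball p r. 0 < y $ i0 \<longrightarrow> f y = Phi y"
      using bd pU by blast
    have "f x = ext_fun i0 Phi x" if x: "x \<in> U \<inter> ball p r" for x
    proof (cases "x \<in> bdry i0")
      case True
      define r' where "r' = r - dist p x"
      have r': "r' > 0" using x by (simp add: r'_def)
      have sub: "ball x r' \<subseteq> ball p r"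
      proof
        fix y assume "y \<in> ball x r'"
        then have "dist x y < r'" by simp
        moreover have "dist p y \<le> dist p x + dist x y" by (rule dist_triangle)
        ultimately show "y \<in> ball p r" by (simp add: r'_def)
      qed
      show ?thesis
        by (rule ext_val[OF True r' Cinf_subset[OF rf(2) sub], symmetric]) (use rf(3) sub in blast)
    next
      case False
      then have "0 < x $ i0" using x Uh by (force simp: halfsp_def bdry_def)
      then show ?thesis using rf(3) x False by (simp add: ext_fun_def)
    qed
    then show ?thesis using rf by (intro exI[of _ "ball p r"] exI[of _ f]) auto
  next
    case False
    then obtain W f where Wf: "open W" "p \<in> W" "W \<subseteq> U - bdry i0" "Cinf W f" "\<forall>x\<in>W. f x = Phi x"
      using int pU by blast
    have "f x = ext_fun i0 Phi x" if "x \<in> U \<inter> W" for x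
      using that Wf by (auto simp: ext_fun_def)
    then show ?thesis using Wf by blast
  qed
qed

lemma S4:
  fixes gp :: "'n::finite \<Rightarrow> real"
  assumes a0: "\<alpha> \<noteq> 0"
  defines "Hp \<equiv> \<lambda>i j k. - inverse \<alpha> * (kd k j * gp i + kd k i * gp j)"
  shows "- (Hp b d c * gp a - Hp a d c * gp b) + (\<Sum>e\<in>UNIV. Hp a e c * Hp b d e - Hp b e c * Hp a d e)
    = (1 - \<alpha>) / \<alpha>^2 * (kd c a * gp b * gp d - kd c b * gp a * gp d)"
proof -
  define Kp where "Kp i j k = kd k j * gp i + kd k i * gp j" for i j k
  have s1: "Kp b d c * gp a - Kp a d c * gp b = kd c b * gp a * gp d - kd c a * gp b * gp d"
    using S1[where gp=gp and a=a and b=b and c=c and d=d] by (simp add: Kp_def)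
  have s2: "(\<Sum>e\<in>UNIV. Kp a e c * Kp b d e - Kp b e c * Kp a d e) = kd c a * gp b * gp d - kd c b * gp a * gp d"
    using S2[where gp=gp and a=a and b=b and c=c and d=d] by (simp add: Kp_def)
  have H: "Hp = (\<lambda>i j k. - inverse \<alpha> * Kp i j k)" by (simp add: Hp_def Kp_def)
  have "(\<Sum>e\<in>UNIV. Hp a e c * Hp b d e - Hp b e c * Hp a d e)
      = inverse \<alpha> ^ 2 * (\<Sum>e\<in>UNIV. Kp a e c * Kp b d e - Kp b e c * Kp a d e)"
    unfolding H sum_distrib_left by (rule sum.cong) (simp_all add: algebra_simps power2_eq_square)
  also have "\<dots> = inverse \<alpha> ^ 2 * (kd c a * gp b * gp d - kd c b * gp a * gp d)" by (simp add: s2)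
  finally have sum: "(\<Sum>e\<in>UNIV. Hp a e c * Hp b d e - Hp b e c * Hp a d e) = inverse \<alpha> ^ 2 * (kd c a * gp b * gp d - kd c b * gp a * gp d)" .
  have fst: "- (Hp b d c * gp a - Hp a d c * gp b) = inverse \<alpha> * (kd c b * gp a * gp d - kd c a * gp b * gp d)"
  proof -
    have "- (Hp b d c * gp a - Hp a d c * gp b) = inverse \<alpha> * (Kp b d c * gp a - Kp a d c * gp b)"
      unfolding H by (simp add: algebra_simps)
    then show ?thesis using s1 by simp
  qed
  show ?thesis unfolding sum fst using a0
    by (simp add: field_simps power2_eq_square)
qed

lemma interior_smooth:
  fixes i0 :: "'n::finite" and D U :: "(real^'n) set"
    and \<Gamma> :: "'n \<Rightarrow> 'n \<Rightarrow> 'n \<Rightarrow> real^'n \<Rightarrow> real" and \<rho> :: "real^'n \<Rightarrow> real"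
  assumes D: "openin (top_of_set (halfsp i0)) D"
    and conn_smooth: "\<forall>i j k. Cinf (D - bdry i0) (\<Gamma> i j k)"
    and UD: "U \<subseteq> D" and rho: "ldf i0 U \<rho>"
  shows "\<forall>p\<in>U - bdry i0. \<exists>W f. open W \<and> p \<in> W \<and> W \<subseteq> U - bdry i0 \<and> Cinf W f
            \<and> (\<forall>x\<in>W. f x = (\<rho> x)^n * curv \<Gamma> a b c d x)"
proof
  fix p assume p: "p \<in> U - bdry i0"
  have Uo: "open (U - bdry i0)" using rho open_minus_bdry by (auto simp: ldf_def)
  have Do: "open (D - bdry i0)" using D open_minus_bdry by auto
  obtain W2 g0 where W2: "open W2" "p \<in> W2" "Cinf W2 g0" "\<forall>x\<in>U \<inter> W2. g0 x = \<rho> x"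
    using rho p unfolding ldf_def smooth_upto_def by blast
  define W where "W = (U - bdry i0) \<inter> W2"
  have W: "open W" "p \<in> W" "W \<subseteq> U - bdry i0" using Uo W2 p by (auto simp: W_def)
  have cc: "Cinf (D - bdry i0) (curv \<Gamma> a b c d)"
    by (rule Cinf_curv[OF Do]) (use conn_smooth in blast)
  have "Cinf W (\<lambda>x. (g0 x)^n * curv \<Gamma> a b c d x)"
  proof (rule Cinf_mult)
    show "Cinf W (\<lambda>x. (g0 x)^n)" by (rule Cinf_power[OF Cinf_subset[OF W2(3)]]) (auto simp: W_def)
    show "Cinf W (curv \<Gamma> a b c d)" by (rule Cinf_subset[OF cc]) (use UD in \<open>auto simp: W_def\<close>)
  qed
  moreover have "\<forall>x\<in>W. (g0 x)^n * curv \<Gamma> a b c d x = (\<rho> x)^n * curv \<Gamma> a b c d x"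
    using W2(4) by (auto simp: W_def)
  ultimately show "\<exists>W f. open W \<and> p \<in> W \<and> W \<subseteq> U - bdry i0 \<and> Cinf W f
            \<and> (\<forall>x\<in>W. f x = (\<rho> x)^n * curv \<Gamma> a b c d x)" using W by blast
qed

lemma local_facts:
  fixes i0 :: "'n::finite" and U :: "(real^'n) set" and \<rho> g :: "real^'n \<Rightarrow> real"
  assumes rho: "ldf i0 U \<rho>"
    and r: "r > 0" and gC: "Cinf (ball p r) g"
    and gU: "\<forall>x\<in>ball p r. 0 \<le> x $ i0 \<longrightarrow> x \<in> U \<and> g x = \<rho> x"
    and y: "y \<in> ball p r" "0 < y $ i0"
  shows "\<rho> y = g y" "g y \<noteq> 0" "pd m \<rho> y = pd m g y" "y \<in> U - bdry i0"
proof -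
  define V where "V = {x. x \<in> ball p r \<and> 0 < x $ i0}"
  have V: "open V" "y \<in> V" using open_hb[of p r i0] y by (auto simp: V_def)
  show "\<rho> y = g y" using gU y by auto
  show "y \<in> U - bdry i0" using gU y by (auto simp: bdry_def)
  then show "g y \<noteq> 0" using rho gU y by (auto simp: ldf_def)
  show "pd m \<rho> y = pd m g y" by (rule pd_cong_open[OF V]) (use gU in \<open>auto simp: V_def\<close>)
qed

lemma bdry_pd_transfer:
  fixes g g' :: "real^'n::finite \<Rightarrow> real"
  assumes p0: "p $ i0 = 0" and r: "r > 0" and gC: "Cinf (ball p r) g"
    and gU: "\<forall>x\<in>ball p r. 0 \<le> x $ i0 \<longrightarrow> x \<in> U \<and> g x = \<rho> x"
    and W: "open W" "p \<in> W" "Cinf W g'" "\<forall>x\<in>U \<inter> W. g' x = \<rho> x"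
  shows "pd i g' p = pd i g p" "pd i (pd j g') p = pd i (pd j g) p"
proof -
  obtain e' where e': "e' > 0" "ball p e' \<subseteq> W" using W(1,2) open_contains_ball by blast
  define e where "e = min r e'"
  have e: "e > 0" using r e' by (simp add: e_def)
  have eq: "g' x = g x" if "x \<in> ball p e" "0 < x $ i0" for x
    using that gU W(4) e' by (auto simp: e_def)
  have pr: "p \<in> ball p r" using r by simp
  show "pd i g' p = pd i g p"
    by (rule bdry_Cinf_pd_eq[OF W(3,1,2) gC open_ball pr p0 e eq])
  show "pd i (pd j g') p = pd i (pd j g) p"
    by (rule bdry_Cinf_pd_eq[OF Cinf_pd[OF W(3,1)] W(1,2) Cinf_pd[OF gC open_ball] open_ball pr p0 e hb_pd_eq[OF eq]])
qed


lemma bdry_case2: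
  fixes i0 :: "'n::finite" and D U :: "(real^'n) set"
    and \<Gamma> :: "'n \<Rightarrow> 'n \<Rightarrow> 'n \<Rightarrow> real^'n \<Rightarrow> real" and \<alpha> :: real and \<rho> :: "real^'n \<Rightarrow> real"
  assumes alpha_pos: "0 < \<alpha>" and pc: "proj_compact i0 D \<alpha> \<Gamma>"
    and UD: "U \<subseteq> D" and rho: "ldf i0 U \<rho>" and pU: "p \<in> U \<inter> bdry i0"
  shows "\<exists>r f. r > 0 \<and> Cinf (ball p r) f \<and> (\<forall>y\<in>ball p r. 0 < y $ i0 \<longrightarrow> f y = (\<rho> y)^2 * curv \<Gamma> a b c d y)
     \<and> (\<forall>W g'. open W \<and> p \<in> W \<and> Cinf W g' \<and> (\<forall>x\<in>U \<inter> W. g' x = \<rho> x) \<longrightarrow>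
         f p = (1 - \<alpha>) / \<alpha>^2 * (kd c a * pd b g' p * pd d g' p - kd c b * pd a g' p * pd d g' p))"
proof -
  obtain r g G where r: "r > 0" and gC: "Cinf (ball p r) g"
    and gU: "\<forall>x\<in>ball p r. 0 \<le> x $ i0 \<longrightarrow> x \<in> U \<and> g x = \<rho> x"
    and GC: "\<forall>i j k. Cinf (ball p r) (G i j k)"
    and GS: "\<forall>i j k. \<forall>x\<in>ball p r. 0 < x $ i0 \<longrightarrow> G i j k x = shiftconn \<alpha> \<rho> \<Gamma> i j k x"
    using local_data[OF alpha_pos pc UD rho, of p] pU by blast
  have p0: "p $ i0 = 0" using pU by (simp add: bdry_def)
  have pr: "p \<in> ball p r" using r by simp
  have gp0: "g p = 0" using gU pr p0 rho pU by (auto simp: ldf_def)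
  define H where "H i j k y = g y * G i j k y + (- inverse \<alpha>) * (kd k j * pd i g y + kd k i * pd j g y)" for i j k y
  have HC: "Cinf (ball p r) (H i j k)" for i j k
    unfolding H_def[abs_def] using GC gC
    by (intro Cinf_add Cinf_mult Cinf_cmult Cinf_pd open_ball) auto
  define Q where "Q y = g y * (pd a (H b d c) y - pd b (H a d c) y) - (H b d c y * pd a g y - H a d c y * pd b g y)
    + (\<Sum>e\<in>UNIV. H a e c y * H b d e y - H b e c y * H a d e y)" for y
  have QC: "Cinf (ball p r) Q"
    unfolding Q_def[abs_def]
    by (intro Cinf_add Cinf_diff Cinf_mult Cinf_sum Cinf_pd HC gC open_ball) simp
  have Qeq: "Q y = (\<rho> y)^2 * curv \<Gamma> a b c d y" if y: "y \<in> ball p r" "0 < y $ i0" for y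
  proof -
    define V where "V = {x. x \<in> ball p r \<and> 0 < x $ i0}"
    have V: "open V" "y \<in> V" using open_hb[of p r i0] y by (auto simp: V_def)
    have VB: "V \<subseteq> ball p r" by (auto simp: V_def)
    have LF: "\<rho> z = g z" "g z \<noteq> 0" "pd m \<rho> z = pd m g z" if "z \<in> V" for z m
      using local_facts[OF rho r gC gU, of z] that by (auto simp: V_def)
    have GH: "\<Gamma> i j k z = H i j k z / g z" if "z \<in> V" for i j k z
    proof -
      have "G i j k z = shiftconn \<alpha> \<rho> \<Gamma> i j k z" using GS that by (auto simp: V_def)
      then have "G i j k z = \<Gamma> i j k z + (kd k j * pd i g z + kd k i * pd j g z) / (\<alpha> * g z)"
        by (simp add: shiftconn_def LF[OF that])
      then show ?thesis using LF(2)[OF that] alpha_pos by (simp add: H_def field_simps)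
    qed
    have "(g y)^2 * curv \<Gamma> a b c d y = Q y"
      unfolding Q_def
      by (rule curv_id2[OF V Cinf_subset[OF gC VB] Cinf_subset[OF HC VB] LF(2) GH])
    then show ?thesis using LF(1)[OF V(2)] by simp
  qed
  have Qp: "Q p = (1 - \<alpha>) / \<alpha>^2 * (kd c a * pd b g p * pd d g p - kd c b * pd a g p * pd d g p)"
  proof -
    have Hp: "H i j k p = - inverse \<alpha> * (kd k j * pd i g p + kd k i * pd j g p)" for i j k
      by (simp add: H_def gp0)
    have "Q p = - (H b d c p * pd a g p - H a d c p * pd b g p) + (\<Sum>e\<in>UNIV. H a e c p * H b d e p - H b e c p * H a d e p)"
      by (simp add: Q_def gp0)
    also have "\<dots> = (1 - \<alpha>) / \<alpha>^2 * (kd c a * pd b g p * pd d g p - kd c b * pd a g p * pd d g p)"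
      unfolding Hp using S4[where gp="\<lambda>e. pd e g p" and \<alpha>=\<alpha> and a=a and b=b and c=c and d=d] alpha_pos
      by simp
    finally show ?thesis .
  qed
  have fin: "Q p = (1 - \<alpha>) / \<alpha>^2 * (kd c a * pd b g' p * pd d g' p - kd c b * pd a g' p * pd d g' p)"
    if W: "open W" "p \<in> W" "Cinf W g'" "\<forall>x\<in>U \<inter> W. g' x = \<rho> x" for W g'
    using Qp bdry_pd_transfer(1)[OF p0 r gC gU W] by simp
  show ?thesis
    apply (rule exI[of _ r], rule exI[of _ Q])
    using r QC Qeq fin by blast
qed


lemma bdry_case1:
  fixes i0 :: "'n::finite" and D U :: "(real^'n) set"
    and \<Gamma> :: "'n \<Rightarrow> 'n \<Rightarrow> 'n \<Rightarrow> real^'n \<Rightarrow> real" and \<alpha> :: real and \<rho> :: "real^'n \<Rightarrow> real"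
  assumes alpha: "\<alpha> = 1" and pc: "proj_compact i0 D \<alpha> \<Gamma>"
    and torsion_free: "\<forall>i j k. \<forall>x\<in>D - bdry i0. \<Gamma> i j k x = \<Gamma> j i k x"
    and UD: "U \<subseteq> D" and rho: "ldf i0 U \<rho>" and pU: "p \<in> U \<inter> bdry i0"
  shows "\<exists>r f. r > 0 \<and> Cinf (ball p r) f \<and> (\<forall>y\<in>ball p r. 0 < y $ i0 \<longrightarrow> f y = \<rho> y * curv \<Gamma> a b c d y)
     \<and> (\<forall>W g' Gh. open W \<and> p \<in> W \<and> Cinf W g' \<and> (\<forall>x\<in>U \<inter> W. g' x = \<rho> x) \<and>
              (\<forall>i j k. Cinf W (Gh i j k) \<and>
                 (\<forall>x\<in>U \<inter> W - bdry i0. Gh i j k x = shiftconn \<alpha> \<rho> \<Gamma> i j k x))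
         \<longrightarrow> f p = kd c a * (pd b (pd d g') p - (\<Sum>e\<in>UNIV. Gh b d e p * pd e g' p))
                   - kd c b * (pd a (pd d g') p - (\<Sum>e\<in>UNIV. Gh a d e p * pd e g' p)))"
proof -
  have alpha_pos: "0 < \<alpha>" using alpha by simp
  obtain r g G where r: "r > 0" and gC: "Cinf (ball p r) g"
    and gU: "\<forall>x\<in>ball p r. 0 \<le> x $ i0 \<longrightarrow> x \<in> U \<and> g x = \<rho> x"
    and GC: "\<forall>i j k. Cinf (ball p r) (G i j k)"
    and GS: "\<forall>i j k. \<forall>x\<in>ball p r. 0 < x $ i0 \<longrightarrow> G i j k x = shiftconn \<alpha> \<rho> \<Gamma> i j k x"
    using local_data[OF alpha_pos pc UD rho, of p] pU by blast
  have p0: "p $ i0 = 0" using pU by (simp add: bdry_def)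
  have pr: "p \<in> ball p r" using r by simp
  have gp0: "g p = 0" using gU pr p0 rho pU by (auto simp: ldf_def)
  have GC': "Cinf (ball p r) (G i j k)" for i j k using GC by blast
  define Q where "Q y =
    g y * (pd a (G b d c) y - pd b (G a d c) y + (\<Sum>e\<in>UNIV. G a e c y * G b d e y - G b e c y * G a d e y))
    - (pd a (\<lambda>y. kd c d * pd b g y + kd c b * pd d g y) y - pd b (\<lambda>y. kd c d * pd a g y + kd c a * pd d g y) y
       + (\<Sum>e\<in>UNIV. G a e c y * (kd e d * pd b g y + kd e b * pd d g y)
                  + (kd c e * pd a g y + kd c a * pd e g y) * G b d e y
                  - G b e c y * (kd e d * pd a g y + kd e a * pd d g y)
                  - (kd c e * pd b g y + kd c b * pd e g y) * G a d e y))" for y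
  have pgC: "Cinf (ball p r) (pd m g)" for m by (rule Cinf_pd[OF gC open_ball])
  have KC: "Cinf (ball p r) (\<lambda>y. kd c d * pd m g y + kd c n * pd d g y)" for m n
    by (intro Cinf_add Cinf_cmult pgC)
  have QC: "Cinf (ball p r) Q"
    unfolding Q_def[abs_def]
    by (intro Cinf_add Cinf_diff Cinf_mult Cinf_sum Cinf_cmult Cinf_pd[OF KC open_ball] Cinf_pd[OF GC' open_ball]
          GC' gC pgC Cinf_const) simp_all
  have Qeq: "Q y = \<rho> y * curv \<Gamma> a b c d y" if y: "y \<in> ball p r" "0 < y $ i0" for y
  proof -
    define V where "V = {x. x \<in> ball p r \<and> 0 < x $ i0}"
    have V: "open V" "y \<in> V" using open_hb[of p r i0] y by (auto simp: V_def)
    have VB: "V \<subseteq> ball p r" by (auto simp: V_def)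
    have LF: "\<rho> z = g z" "g z \<noteq> 0" "pd m \<rho> z = pd m g z" if "z \<in> V" for z m
      using local_facts[OF rho r gC gU, of z] that by (auto simp: V_def)
    have GG: "\<Gamma> i j k z = G i j k z - (kd k j * pd i g z + kd k i * pd j g z) / g z" if "z \<in> V" for i j k z
    proof -
      have "G i j k z = shiftconn \<alpha> \<rho> \<Gamma> i j k z" using GS that by (auto simp: V_def)
      then show ?thesis by (simp add: shiftconn_def LF[OF that] alpha)
    qed
    have "g y * curv \<Gamma> a b c d y = Q y"
      unfolding Q_def
      by (rule curv_id1[OF V Cinf_subset[OF gC VB] Cinf_subset[OF GC' VB] LF(2) GG])
    then show ?thesis using LF(1)[OF V(2)] by simp
  qed
  have tors: "G i j k p = G j i k p" for i j k
  proof (rule bdry_Cinf_eq[OF GC' open_ball pr GC' open_ball pr p0 r])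
    fix x assume x: "x \<in> ball p r" "0 < x $ i0"
    have xD: "x \<in> D - bdry i0" using local_facts(4)[OF rho r gC gU x] UD by auto
    show "G i j k x = G j i k x"
      using GS x torsion_free xD by (simp add: shiftconn_def add.commute)
  qed
  have cl: "pd a (pd b g) p = pd b (pd a g) p" by (rule clairaut[OF gC open_ball pr])
  have pK: "pd a (\<lambda>y. kd c d * pd m g y + kd c n * pd d g y) p = kd c d * pd a (pd m g) p + kd c n * pd a (pd d g) p"
    for m n a
    using pd_add_Cinf[OF Cinf_cmult[OF pgC] Cinf_cmult[OF pgC] pr] pd_cmult_Cinf[OF pgC pr] by simp
  have sum: "(\<Sum>e\<in>UNIV. G a e c p * (kd e d * pd b g p + kd e b * pd d g p)
                  + (kd c e * pd a g p + kd c a * pd e g p) * G b d e p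
                  - G b e c p * (kd e d * pd a g p + kd e a * pd d g p)
                  - (kd c e * pd b g p + kd c b * pd e g p) * G a d e p)
      = (G a b c p - G b a c p) * pd d g p + kd c a * (\<Sum>e\<in>UNIV. G b d e p * pd e g p)
        - kd c b * (\<Sum>e\<in>UNIV. G a d e p * pd e g p)"
    using S3[where gp="\<lambda>e. pd e g p" and Gp="\<lambda>i j k. G i j k p" and a=a and b=b and c=c and d=d]
    by simp
  have Qp: "Q p = kd c a * (pd b (pd d g) p - (\<Sum>e\<in>UNIV. G b d e p * pd e g p))
                   - kd c b * (pd a (pd d g) p - (\<Sum>e\<in>UNIV. G a d e p * pd e g p))"
    unfolding Q_def gp0 pK sum using tors[of a b c] cl by (simp add: algebra_simps)
  have fin: "Q p = kd c a * (pd b (pd d g') p - (\<Sum>e\<in>UNIV. Gh b d e p * pd e g' p))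
                   - kd c b * (pd a (pd d g') p - (\<Sum>e\<in>UNIV. Gh a d e p * pd e g' p))"
    if W: "open W" "p \<in> W" "Cinf W g'" "\<forall>x\<in>U \<inter> W. g' x = \<rho> x"
      and Gh: "\<forall>i j k. Cinf W (Gh i j k) \<and> (\<forall>x\<in>U \<inter> W - bdry i0. Gh i j k x = shiftconn \<alpha> \<rho> \<Gamma> i j k x)"
    for W g' Gh
  proof -
    obtain e' where e': "e' > 0" "ball p e' \<subseteq> W" using W(1,2) open_contains_ball by blast
    have Ghp: "Gh i j k p = G i j k p" for i j k
    proof (rule bdry_Cinf_eq[OF _ W(1,2) GC' open_ball pr p0])
      show "Cinf W (Gh i j k)" using Gh by blast
      show "0 < min r e'" using r e' by simp
      fix x assume x: "x \<in> ball p (min r e')" "0 < x $ i0"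
      then have "x \<in> U \<inter> W - bdry i0" using gU e' by (auto simp: bdry_def)
      then show "Gh i j k x = G i j k x" using Gh GS x by auto
    qed
    show ?thesis unfolding Qp Ghp bdry_pd_transfer[OF p0 r gC gU W] ..
  qed
  show ?thesis
    apply (rule exI[of _ r], rule exI[of _ Q])
    using r QC Qeq fin by blast
qed

theorem proposition3p2:
  fixes i0 :: "'n::finite" and D U :: "(real^'n) set"
    and \<Gamma> :: "'n \<Rightarrow> 'n \<Rightarrow> 'n \<Rightarrow> real^'n \<Rightarrow> real"
    and \<alpha> :: real and \<rho> :: "real^'n \<Rightarrow> real"
  assumes D: "openin (top_of_set (halfsp i0)) D"
    and conn_smooth: "\<forall>i j k. Cinf (D - bdry i0) (\<Gamma> i j k)"
    and torsion_free: "\<forall>i j k. \<forall>x\<in>D - bdry i0. \<Gamma> i j k x = \<Gamma> j i k x"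
    and alpha_pos: "0 < \<alpha>" and alpha_le: "\<alpha> \<le> 2"
    and pc: "proj_compact i0 D \<alpha> \<Gamma>"
    and UD: "U \<subseteq> D" and rho: "ldf i0 U \<rho>"
  shows
   "(\<alpha> = 1 \<longrightarrow>
      (\<exists>E. (\<forall>a b c d. smooth_upto U (E a b c d)) \<and>
           (\<forall>a b c d. \<forall>x\<in>U - bdry i0. E a b c d x = \<rho> x * curv \<Gamma> a b c d x) \<and>
           (\<forall>p\<in>U \<inter> bdry i0. \<forall>W g Gh.
              open W \<and> p \<in> W \<and> Cinf W g \<and> (\<forall>x\<in>U \<inter> W. g x = \<rho> x) \<and>
              (\<forall>i j k. Cinf W (Gh i j k) \<and>
                 (\<forall>x\<in>U \<inter> W - bdry i0. Gh i j k x = shiftconn \<alpha> \<rho> \<Gamma> i j k x))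
              \<longrightarrow> (\<forall>a b c d. E a b c d p =
                     kd c a * (pd b (pd d g) p - (\<Sum>e\<in>UNIV. Gh b d e p * pd e g p))
                   - kd c b * (pd a (pd d g) p - (\<Sum>e\<in>UNIV. Gh a d e p * pd e g p))))))
    \<and> (\<alpha> \<noteq> 1 \<longrightarrow>
      (\<exists>E. (\<forall>a b c d. smooth_upto U (E a b c d)) \<and>
           (\<forall>a b c d. \<forall>x\<in>U - bdry i0. E a b c d x = (\<rho> x)^2 * curv \<Gamma> a b c d x) \<and>
           (\<forall>p\<in>U \<inter> bdry i0. \<forall>W g.
              open W \<and> p \<in> W \<and> Cinf W g \<and> (\<forall>x\<in>U \<inter> W. g x = \<rho> x)
              \<longrightarrow> (\<forall>a b c d. E a b c d p =
                     (1 - \<alpha>) / \<alpha>^2 * (kd c a * pd b g p * pd d g p - kd c b * pd a g p * pd d g p)))))"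
proof -
  have Uopen: "openin (top_of_set (halfsp i0)) U" using rho by (simp add: ldf_def)
  show ?thesis
  proof (intro conjI impI)
    assume a1: "\<alpha> = 1"
    define E where "E a b c d = ext_fun i0 (\<lambda>x. (\<rho> x)^1 * curv \<Gamma> a b c d x)" for a b c d
    have sm: "smooth_upto U (E a b c d)" for a b c d
      unfolding E_def
    proof (rule ext_smooth[OF Uopen interior_smooth[OF D conn_smooth UD rho]])
      show "\<forall>p\<in>U \<inter> bdry i0. \<exists>r f. r > 0 \<and> Cinf (ball p r) f \<and> (\<forall>y\<in>ball p r. 0 < y $ i0 \<longrightarrow> f y = (\<rho> y)^1 * curv \<Gamma> a b c d y)"
        using bdry_case1[OF a1 pc torsion_free UD rho, of _ a b c d] by fastforce
    qed
    have iv: "E a b c d x = \<rho> x * curv \<Gamma> a b c d x" if "x \<in> U - bdry i0" for a b c d x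
      using that by (simp add: E_def ext_fun_def)
    have bv: "E a b c d p =
                     kd c a * (pd b (pd d g) p - (\<Sum>e\<in>UNIV. Gh b d e p * pd e g p))
                   - kd c b * (pd a (pd d g) p - (\<Sum>e\<in>UNIV. Gh a d e p * pd e g p))"
      if p: "p \<in> U \<inter> bdry i0" and W: "open W \<and> p \<in> W \<and> Cinf W g \<and> (\<forall>x\<in>U \<inter> W. g x = \<rho> x) \<and>
              (\<forall>i j k. Cinf W (Gh i j k) \<and>
                 (\<forall>x\<in>U \<inter> W - bdry i0. Gh i j k x = shiftconn \<alpha> \<rho> \<Gamma> i j k x))" for p W g Gh a b c d
    proof -
      obtain r f where rf: "r > 0" "Cinf (ball p r) f" "\<forall>y\<in>ball p r. 0 < y $ i0 \<longrightarrow> f y = \<rho> y * curv \<Gamma> a b c d y"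
        "\<forall>W g' Gh. open W \<and> p \<in> W \<and> Cinf W g' \<and> (\<forall>x\<in>U \<inter> W. g' x = \<rho> x) \<and>
              (\<forall>i j k. Cinf W (Gh i j k) \<and>
                 (\<forall>x\<in>U \<inter> W - bdry i0. Gh i j k x = shiftconn \<alpha> \<rho> \<Gamma> i j k x))
         \<longrightarrow> f p = kd c a * (pd b (pd d g') p - (\<Sum>e\<in>UNIV. Gh b d e p * pd e g' p))
                   - kd c b * (pd a (pd d g') p - (\<Sum>e\<in>UNIV. Gh a d e p * pd e g' p))"
        using bdry_case1[OF a1 pc torsion_free UD rho p, of a b c d] by blast
      have "E a b c d p = f p"
        unfolding E_def by (rule ext_val) (use p rf in auto)
      also have "\<dots> = kd c a * (pd b (pd d g) p - (\<Sum>e\<in>UNIV. Gh b d e p * pd e g p))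
                   - kd c b * (pd a (pd d g) p - (\<Sum>e\<in>UNIV. Gh a d e p * pd e g p))"
        using rf(4) W by blast
      finally show ?thesis .
    qed
    show "\<exists>E. (\<forall>a b c d. smooth_upto U (E a b c d)) \<and>
           (\<forall>a b c d. \<forall>x\<in>U - bdry i0. E a b c d x = \<rho> x * curv \<Gamma> a b c d x) \<and>
           (\<forall>p\<in>U \<inter> bdry i0. \<forall>W g Gh.
              open W \<and> p \<in> W \<and> Cinf W g \<and> (\<forall>x\<in>U \<inter> W. g x = \<rho> x) \<and>
              (\<forall>i j k. Cinf W (Gh i j k) \<and>
                 (\<forall>x\<in>U \<inter> W - bdry i0. Gh i j k x = shiftconn \<alpha> \<rho> \<Gamma> i j k x))
              \<longrightarrow> (\<forall>a b c d. E a b c d p =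
                     kd c a * (pd b (pd d g) p - (\<Sum>e\<in>UNIV. Gh b d e p * pd e g p))
                   - kd c b * (pd a (pd d g) p - (\<Sum>e\<in>UNIV. Gh a d e p * pd e g p))))"
      apply (rule exI[of _ E])
      apply (intro conjI allI ballI impI)
        apply (rule sm)
       apply (rule iv, assumption)
      apply (rule bv, assumption+)
      done
  next
    assume a1: "\<alpha> \<noteq> 1"
    define E where "E a b c d = ext_fun i0 (\<lambda>x. (\<rho> x)^2 * curv \<Gamma> a b c d x)" for a b c d
    have sm: "smooth_upto U (E a b c d)" for a b c d
      unfolding E_def
    proof (rule ext_smooth[OF Uopen interior_smooth[OF D conn_smooth UD rho]])
      show "\<forall>p\<in>U \<inter> bdry i0. \<exists>r f. r > 0 \<and> Cinf (ball p r) f \<and> (\<forall>y\<in>ball p r. 0 < y $ i0 \<longrightarrow> f y = (\<rho> y)^2 * curv \<Gamma> a b c d y)"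
        using bdry_case2[OF alpha_pos pc UD rho, of _ a b c d] by fastforce
    qed
    have iv: "E a b c d x = (\<rho> x)^2 * curv \<Gamma> a b c d x" if "x \<in> U - bdry i0" for a b c d x
      using that by (simp add: E_def ext_fun_def)
    have bv: "E a b c d p = (1 - \<alpha>) / \<alpha>^2 * (kd c a * pd b g p * pd d g p - kd c b * pd a g p * pd d g p)"
      if p: "p \<in> U \<inter> bdry i0" and W: "open W \<and> p \<in> W \<and> Cinf W g \<and> (\<forall>x\<in>U \<inter> W. g x = \<rho> x)" for p W g a b c d
    proof -
      obtain r f where rf: "r > 0" "Cinf (ball p r) f" "\<forall>y\<in>ball p r. 0 < y $ i0 \<longrightarrow> f y = (\<rho> y)^2 * curv \<Gamma> a b c d y"
        "\<forall>W g'. open W \<and> p \<in> W \<and> Cinf W g' \<and> (\<forall>x\<in>U \<inter> W. g' x = \<rho> x) \<longrightarrow>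
         f p = (1 - \<alpha>) / \<alpha>^2 * (kd c a * pd b g' p * pd d g' p - kd c b * pd a g' p * pd d g' p)"
        using bdry_case2[OF alpha_pos pc UD rho p, of a b c d] by blast
      have "E a b c d p = f p"
        unfolding E_def by (rule ext_val) (use p rf in auto)
      also have "\<dots> = (1 - \<alpha>) / \<alpha>^2 * (kd c a * pd b g p * pd d g p - kd c b * pd a g p * pd d g p)"
        using rf(4) W by blast
      finally show ?thesis .
    qed
    show "\<exists>E. (\<forall>a b c d. smooth_upto U (E a b c d)) \<and>
           (\<forall>a b c d. \<forall>x\<in>U - bdry i0. E a b c d x = (\<rho> x)^2 * curv \<Gamma> a b c d x) \<and>
           (\<forall>p\<in>U \<inter> bdry i0. \<forall>W g.
              open W \<and> p \<in> W \<and> Cinf W g \<and> (\<forall>x\<in>U \<inter> W. g x = \<rho> x)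
              \<longrightarrow> (\<forall>a b c d. E a b c d p =
                     (1 - \<alpha>) / \<alpha>^2 * (kd c a * pd b g p * pd d g p - kd c b * pd a g p * pd d g p)))"
      apply (rule exI[of _ E])
      apply (intro conjI allI ballI impI)
        apply (rule sm)
       apply (rule iv, assumption)
      apply (rule bv, assumption+)
      done
  qed
qed

end
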